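(* Let $S$ be a finite semigroup, let $*:S\to S$ be an anti-involution of $S$, let $R$ be a commutative ring with $1$, and let $\alpha:S\times S\to R$ be a twisting. Assume: (A1) $\alpha(x,y)=\alpha(y^*,x^* )$ for all $x,y\in S$. (A2) For each $\mathcal D$-class $D$ of $S$ there is an idempotent $1_D\in D$ with $1_D^*=1_D$. Let $L_D$ be the $\mathcal L$-class of $1_D$, let $L_D^*=\{x^*\mid x\in L_D\}$ (this is the $\mathcal R$-class of $1_D$), and let $G_D=L_D\cap L_D^*$ (the $\mathcal H$-class of $1_D$, a group, mapped to itself by $*$). (A3) For each $\mathcal D$-class $D$ there is a map $\beta_D:L_D\times L_D^*\to G(R)$, where $G(R)$ is the group of units of $R$, such that $\beta_D(x,y)\beta_D(xy,z)=\beta_D(x,yz)\beta_D(y,z)$, $\alpha(x,y)\beta_D(xy,z)=\alpha(x,yz)\beta_D(y,z)$, and $\beta_D(x,y)=\beta_D(y^*,x^* )$, for all $x,y,z\in S$ for which every value of $\beta_D$ occurring in the respective identity has its arguments in $L_D\times L_D^*$. (A4) For each $\mathcal D$-class $D$, the twisted group algebra $R^{\beta_D}[G_D]$ (with twisting the restriction of $\beta_D$ to $G_D\times G_D$) is cellular with cell datum $(\Lambda_D,M_D,C,* )$, where $*$ here denotes the $R$-linear extension of $*|_{G_D}$ to $R^{\beta_D}[G_D]$. Write each cellular basis element of $R^{\beta_D}[G_D]$ as $C^\lambda_{st}=\sum_{g\in G_D}c^\lambda_{st}(g)\,g$ with $c^\lambda_{st}(g)\in R$. Let $\mathcal D$ denote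 the set of $\mathcal D$-classes of $S$ and, for $D\in\mathcal D$, let $\mathcal L_D$ be the set of $\mathcal L$-classes contained in $D$. Let $\Lambda=\{(D,\lambda)\mid D\in\mathcal D,\ \lambda\in\Lambda_D\}$, partially ordered by $(D_1,\lambda_1)\le(D_2,\lambda_2)$ iff $D_1<_{\mathcal D}D_2$, or $D_1=D_2$ and $\lambda_1\le\lambda_2$ in $\Lambda_{D_1}$. For $(D,\lambda)\in\Lambda$ let $M(D,\lambda)=\mathcal L_D\times M_D(\lambda)$. For each $L\in\mathcal L_D$ choose any $u_L\in L$ with $u_L\,\mathcal R\,1_D$, and for $(L,s),(K,t)\in M(D,\lambda)$ define \[C^{(D,\lambda)}_{(L,s)(K,t)}=\sum_{g\in G_D}c^\lambda_{st}(g)\,\beta_D(u_L^*,g)\,\beta_D(u_L^*g,u_K)\,(u_L^*gu_K)\in R^\alpha[S].\] Then $R^\alpha[S]$ is a cellular algebra with cell datum $(\Lambda,M,C,* )$, where $*$ is the $R$-linear extension of $*$ to $R^\alpha[S]$.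
   Context: Green's relations on a semigroup $S$ (with $S^1$ the monoid obtained by adjoining an identity): $x\le_{\mathcal R}y$ iff $x\in yS^1$; $x\le_{\mathcal L}y$ iff $x\in S^1y$; $x\le_{\mathcal J}y$ iff $x\in S^1yS^1$; $\mathcal R,\mathcal L,\mathcal J$ are the equivalences $\le\cap\ge$ of these preorders; $\mathcal H=\mathcal R\cap\mathcal L$; $\mathcal D$ is the equivalence relation generated by $\mathcal R\cup\mathcal L$. For finite $S$, $\mathcal D=\mathcal J$, so $\le_{\mathcal J}$ induces a partial order $\le_{\mathcal D}$ on the set of $\mathcal D$-classes; $D_1<_{\mathcal D}D_2$ means $D_1\le_{\mathcal D}D_2$ and $D_1\ne D_2$. An anti-involution of $S$ is a map $*:S\to S$ with $(x^* )^*=x$ and $(xy)^*=y^*x^*$. A twisting from $S$ into $R$ is a map $\alpha:S\times S\to R$ with $\alpha(x,y)\alpha(xy,z)=\alpha(x,yz)\alpha(y,z)$ for all $x,y,z$; the twisted semigroup algebra $R^\alpha[S]$ is the free $R$-module with basis $S$ and product $x\cdot y=\alpha(x,y)(xy)$ extended bilinearly (associative). By (A1), $*$ extends $R$-linearly to an anti-involution of $R^\alpha[S]$; similarly for $R^{\beta_D}[G_D]$. An anti-involution of an $R$-algebra $A$ is an $R$-linear map $*$ with $(a^* )^*=a$ and $(ab)^*=b^*a^*$. An $R$-algebra $A$ is cellular with cell datum $(\Lambda,M,C,* )$ if: (C1) $\Lambda$ is a finite poset, for each $\lambda\in\Lambda$ there is a finite set $M(\lambda)$ and elements $C^\lambda_{st}\in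 A$ ($s,t\in M(\lambda)$), and $\{C^\lambda_{st}\}$ is an $R$-basis of $A$; (C2) $*$ is an anti-involution of $A$ with $(C^\lambda_{st})^*=C^\lambda_{ts}$; (C3) for all $\lambda$, $s\in M(\lambda)$, $a\in A$ there exist $r_a(s',s)\in R$ ($s'\in M(\lambda)$) such that for every $t\in M(\lambda)$, $aC^\lambda_{st}\in\sum_{s'}r_a(s',s)C^\lambda_{s't}+A(<\lambda)$, where $A(<\lambda)$ is the $R$-span of all $C^\mu_{s''t''}$ with $\mu<\lambda$. *)

theory Defs
  imports Main
begin

definition leR :: "'a::semigroup_mult \<Rightarrow> 'a \<Rightarrow> bool" where
  "leR x y \<longleftrightarrow> x = y \<or> (\<exists>s. x = y * s)"
definition leL :: "'a::semigroup_mult \<Rightarrow> 'a \<Rightarrow> bool" where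
  "leL x y \<longleftrightarrow> x = y \<or> (\<exists>s. x = s * y)"
definition leJ :: "'a::semigroup_mult \<Rightarrow> 'a \<Rightarrow> bool" where
  "leJ x y \<longleftrightarrow> x = y \<or> (\<exists>s. x = s * y) \<or> (\<exists>s. x = y * s) \<or> (\<exists>s t. x = s * y * t)"

definition greenR :: "'a::semigroup_mult \<Rightarrow> 'a \<Rightarrow> bool" where
  "greenR x y \<longleftrightarrow> leR x y \<and> leR y x"
definition greenL :: "'a::semigroup_mult \<Rightarrow> 'a \<Rightarrow> bool" where
  "greenL x y \<longleftrightarrow> leL x y \<and> leL y x"
definition greenH :: "'a::semigroup_mult \<Rightarrow> 'a \<Rightarrow> bool" where
  "greenH x y \<longleftrightarrow> greenR x y \<and> greenL x y"
definition greenD :: "'a::semigroup_mult \<Rightarrow> 'a \<Rightarrow> bool" where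
  "greenD = (\<lambda>x y. greenR x y \<or> greenL x y)\<^sup>*\<^sup>*"

definition Dclasses :: "'a::semigroup_mult set set" where
  "Dclasses = range (\<lambda>x. {y. greenD x y})"

definition Lclasses :: "'a::semigroup_mult set \<Rightarrow> 'a set set" where
  "Lclasses D = (\<lambda>x. {y. greenL x y}) ` D"

text \<open>Order on D-classes induced by the J-preorder (D = J for finite semigroups).\<close>
definition leDcl :: "'a::semigroup_mult set \<Rightarrow> 'a set \<Rightarrow> bool" where
  "leDcl D1 D2 \<longleftrightarrow> (\<exists>x\<in>D1. \<exists>y\<in>D2. leJ x y)"
definition lessDcl :: "'a::semigroup_mult set \<Rightarrow> 'a set \<Rightarrow> bool" where
  "lessDcl D1 D2 \<longleftrightarrow> leDcl D1 D2 \<and> D1 \<noteq> D2"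

definition anti_involution :: "('a::semigroup_mult \<Rightarrow> 'a) \<Rightarrow> bool" where
  "anti_involution st \<longleftrightarrow> (\<forall>x. st (st x) = x) \<and> (\<forall>x y. st (x * y) = st y * st x)"

definition twisting :: "('a::semigroup_mult \<Rightarrow> 'a \<Rightarrow> 'r::comm_ring_1) \<Rightarrow> bool" where
  "twisting \<alpha> \<longleftrightarrow> (\<forall>x y z. \<alpha> x y * \<alpha> (x * y) z = \<alpha> x (y * z) * \<alpha> y z)"

text \<open>L_D (L-class of 1_D) and G_D = L_D inter L_D^*, given the choice 1_D = one D.\<close>
definition LD :: "('a::semigroup_mult set \<Rightarrow> 'a) \<Rightarrow> 'a set \<Rightarrow> 'a set" where
  "LD one D = {y. greenL (one D) y}"
definition GD :: "('a::semigroup_mult \<Rightarrow> 'a) \<Rightarrow> ('a set \<Rightarrow> 'a) \<Rightarrow> 'a set \<Rightarrow> 'a set" where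
  "GD st one D = LD one D \<inter> st ` LD one D"

section \<open>Twisted algebra R^gamma[T] on a finite subset T: elements are coefficient
  functions vanishing outside T\<close>

definition tvec :: "'a set \<Rightarrow> ('a \<Rightarrow> 'r::comm_ring_1) set" where
  "tvec T = {f. \<forall>z. z \<notin> T \<longrightarrow> f z = 0}"

definition tmult :: "('a::semigroup_mult \<Rightarrow> 'a \<Rightarrow> 'r::comm_ring_1) \<Rightarrow> 'a set
    \<Rightarrow> ('a \<Rightarrow> 'r) \<Rightarrow> ('a \<Rightarrow> 'r) \<Rightarrow> ('a \<Rightarrow> 'r)" where
  "tmult \<gamma> T f h = (\<lambda>z. \<Sum>x\<in>T. \<Sum>y\<in>T. if x * y = z then \<gamma> x y * f x * h y else 0)"

text \<open>R-linear extension of sigma: sum f(x) x |-> sum f(x) sigma(x).\<close>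
definition tstar :: "('a \<Rightarrow> 'a) \<Rightarrow> 'a set \<Rightarrow> ('a \<Rightarrow> 'r::comm_ring_1) \<Rightarrow> ('a \<Rightarrow> 'r)" where
  "tstar \<sigma> T f = (\<lambda>z. if z \<in> T then f (\<sigma> z) else 0)"

definition alg_anti_involution ::
  "('a::semigroup_mult \<Rightarrow> 'a \<Rightarrow> 'r::comm_ring_1) \<Rightarrow> 'a set \<Rightarrow> ('a \<Rightarrow> 'a) \<Rightarrow> bool" where
  "alg_anti_involution \<gamma> T \<sigma> \<longleftrightarrow>
     (\<forall>c::'r. \<forall>f\<in>tvec T. \<forall>h\<in>tvec T.
        tstar \<sigma> T (\<lambda>z. c * f z + h z) = (\<lambda>z. c * tstar \<sigma> T f z + tstar \<sigma> T h z)) \<and>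
     (\<forall>f::'a \<Rightarrow> 'r. f \<in> tvec T \<longrightarrow> tstar \<sigma> T (tstar \<sigma> T f) = f) \<and>
     (\<forall>f\<in>tvec T. \<forall>h\<in>tvec T.
        tstar \<sigma> T (tmult \<gamma> T f h) = tmult \<gamma> T (tstar \<sigma> T h) (tstar \<sigma> T f))"

definition partial_order_on_set :: "'l set \<Rightarrow> ('l \<Rightarrow> 'l \<Rightarrow> bool) \<Rightarrow> bool" where
  "partial_order_on_set \<Lambda> le \<longleftrightarrow>
     (\<forall>x\<in>\<Lambda>. le x x) \<and>
     (\<forall>x\<in>\<Lambda>. \<forall>y\<in>\<Lambda>. le x y \<and> le y x \<longrightarrow> x = y) \<and>
     (\<forall>x\<in>\<Lambda>. \<forall>y\<in>\<Lambda>. \<forall>z\<in>\<Lambda>. le x y \<and> le y z \<longrightarrow> le x z)"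

definition cell_idx :: "'l set \<Rightarrow> ('l \<Rightarrow> 'm set) \<Rightarrow> ('l \<times> 'm \<times> 'm) set" where
  "cell_idx \<Lambda> M = Sigma \<Lambda> (\<lambda>l. M l \<times> M l)"

definition cspan :: "('l \<Rightarrow> 'm \<Rightarrow> 'm \<Rightarrow> ('a \<Rightarrow> 'r::comm_ring_1)) \<Rightarrow> ('l \<times> 'm \<times> 'm) set
    \<Rightarrow> ('a \<Rightarrow> 'r) set" where
  "cspan C J = {f. \<exists>c. f = (\<lambda>z. \<Sum>(l,s,t)\<in>J. c (l,s,t) * C l s t z)}"

definition cellular ::
  "'a set \<Rightarrow> ('a::semigroup_mult \<Rightarrow> 'a \<Rightarrow> 'r::comm_ring_1) \<Rightarrow> ('a \<Rightarrow> 'a) \<Rightarrow>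
   'l set \<Rightarrow> ('l \<Rightarrow> 'l \<Rightarrow> bool) \<Rightarrow> ('l \<Rightarrow> 'm set) \<Rightarrow> ('l \<Rightarrow> 'm \<Rightarrow> 'm \<Rightarrow> ('a \<Rightarrow> 'r)) \<Rightarrow> bool" where
  "cellular T \<gamma> \<sigma> \<Lambda> le M C \<longleftrightarrow>
     \<comment> \<open>(C1)\<close>
     finite \<Lambda> \<and> partial_order_on_set \<Lambda> le \<and> (\<forall>l\<in>\<Lambda>. finite (M l)) \<and>
     (\<forall>l\<in>\<Lambda>. \<forall>s\<in>M l. \<forall>t\<in>M l. C l s t \<in> tvec T) \<and>
     (\<forall>f\<in>tvec T. \<exists>!c. (\<forall>i. i \<notin> cell_idx \<Lambda> M \<longrightarrow> c i = 0) \<and>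
         f = (\<lambda>z. \<Sum>(l,s,t)\<in>cell_idx \<Lambda> M. c (l,s,t) * C l s t z)) \<and>
     \<comment> \<open>(C2)\<close>
     alg_anti_involution \<gamma> T \<sigma> \<and>
     (\<forall>l\<in>\<Lambda>. \<forall>s\<in>M l. \<forall>t\<in>M l. tstar \<sigma> T (C l s t) = C l t s) \<and>
     \<comment> \<open>(C3)\<close>
     (\<forall>l\<in>\<Lambda>. \<forall>s\<in>M l. \<forall>a\<in>tvec T. \<exists>r. \<forall>t\<in>M l.
        (\<lambda>z. tmult \<gamma> T a (C l s t) z - (\<Sum>s'\<in>M l. r s' * C l s' t z))
          \<in> cspan C {(m, s'', t''). (m, s'', t'') \<in> cell_idx \<Lambda> M \<and> le m l \<and> m \<noteq> l})"

end

theory Submission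
  imports Defs
begin

section \<open>Generic semigroup facts\<close>

fun mo :: "'a::semigroup_mult option \<Rightarrow> 'a \<Rightarrow> 'a" where
  "mo None x = x" | "mo (Some p) x = p * x"
fun om :: "'a::semigroup_mult \<Rightarrow> 'a option \<Rightarrow> 'a" where
  "om x None = x" | "om x (Some q) = x * q"

lemma mo_mo_eq: "mo p (mo p' x) = mo (case p of None \<Rightarrow> p' | Some a \<Rightarrow> (case p' of None \<Rightarrow> Some a | Some b \<Rightarrow> Some (a*b))) (x::'a::semigroup_mult)"
  by (cases p; cases p') (simp_all add: mult.assoc)
lemma mo_mo: "\<exists>r. mo p (mo p' x) = mo r (x::'a::semigroup_mult)"
  using mo_mo_eq by blast
lemma om_om_eq: "om (om x q') q = om x (case q' of None \<Rightarrow> q | Some a \<Rightarrow> (case q of None \<Rightarrow> Some a | Some b \<Rightarrow> Some (a*b)))"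
  by (cases q; cases q') (simp_all add: mult.assoc)
lemma om_om: "\<exists>r. om (om x q') q = om (x::'a::semigroup_mult) r"
  using om_om_eq by blast
lemma mo_om: "mo p (om x q) = om (mo p (x::'a::semigroup_mult)) q"
  by (cases p; cases q) (auto simp: mult.assoc)
lemma mo_mult: "mo p (x * y) = mo p (x::'a::semigroup_mult) * y"
  by (cases p) (auto simp: mult.assoc)
lemma om_mult: "om (x * y) q = (x::'a::semigroup_mult) * om y q"
  by (cases q) (auto simp: mult.assoc)

lemma leL_mo: "leL x y \<longleftrightarrow> (\<exists>p. x = mo p y)"
proof
  assume "leL x y" then show "\<exists>p. x = mo p y" unfolding leL_def
    by (auto intro: exI[of _ None] exI[of _ "Some _"])
next
  assume "\<exists>p. x = mo p y" then obtain p where "x = mo p y" by blast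
  then show "leL x y" unfolding leL_def by (cases p) auto
qed
lemma leR_om: "leR x y \<longleftrightarrow> (\<exists>q. x = om y q)"
proof
  assume "leR x y" then show "\<exists>q. x = om y q" unfolding leR_def
    by (auto intro: exI[of _ None] exI[of _ "Some _"])
next
  assume "\<exists>q. x = om y q" then obtain q where "x = om y q" by blast
  then show "leR x y" unfolding leR_def by (cases q) auto
qed
lemma leJ_mo: "leJ x y \<longleftrightarrow> (\<exists>p q. x = mo p (om y q))"
proof
  assume "leJ x y" then show "\<exists>p q. x = mo p (om y q)" unfolding leJ_def
  proof (elim disjE exE)
    assume "x = y" then show ?thesis by (intro exI[of _ None]) simp
  next
    fix s assume "x = s * y" then show ?thesis by (intro exI[of _ "Some s"] exI[of _ None]) simp
  next
    fix s assume "x = y * s" then show ?thesis by (intro exI[of _ None] exI[of _ "Some s"]) simp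
  next
    fix s t assume "x = s * y * t" then show ?thesis by (intro exI[of _ "Some s"] exI[of _ "Some t"]) (simp add: mult.assoc)
  qed
next
  assume "\<exists>p q. x = mo p (om y q)"
  then obtain p q where "x = mo p (om y q)" by blast
  then show "leJ x y" unfolding leJ_def
  proof (cases p; cases q)
    fix a b assume "x = mo p (om y q)" "p = Some a" "q = Some b"
    then have "x = a * y * b" by (simp add: mult.assoc)
    then show "x = y \<or> (\<exists>s. x = s * y) \<or> (\<exists>s. x = y * s) \<or> (\<exists>s t. x = s * y * t)" by blast
  qed auto
qed

lemma leL_refl: "leL x x" by (simp add: leL_def)
lemma leR_refl: "leR x x" by (simp add: leR_def)
lemma leJ_refl: "leJ x x" by (simp add: leJ_def)
lemma leL_trans: "leL x y \<Longrightarrow> leL y z \<Longrightarrow> leL x z"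
  unfolding leL_mo by (metis mo_mo)
lemma leR_trans: "leR x y \<Longrightarrow> leR y z \<Longrightarrow> leR x z"
  unfolding leR_om by (metis om_om)
lemma leJ_trans: "leJ x y \<Longrightarrow> leJ y z \<Longrightarrow> leJ x z"
proof -
  assume "leJ x y" "leJ y z"
  then obtain p q p' q' where "x = mo p (om y q)" "y = mo p' (om z q')" unfolding leJ_mo by blast
  then have "x = mo p (mo p' (om (om z q') q))" by (simp add: mo_om)
  then have "x = mo (case p of None \<Rightarrow> p' | Some a \<Rightarrow> (case p' of None \<Rightarrow> Some a | Some b \<Rightarrow> Some (a*b)))
     (om z (case q' of None \<Rightarrow> q | Some a \<Rightarrow> (case q of None \<Rightarrow> Some a | Some b \<Rightarrow> Some (a*b))))"
    by (simp only: mo_mo_eq om_om_eq)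
  then show ?thesis unfolding leJ_mo by blast
qed
lemma leL_J: "leL x y \<Longrightarrow> leJ x y" unfolding leL_def leJ_def by blast
lemma leR_J: "leR x y \<Longrightarrow> leJ x y" unfolding leR_def leJ_def by blast
lemma leJ_mult1: "leJ (x * y) x" unfolding leJ_def by blast
lemma leJ_mult2: "leJ (x * y) y" unfolding leJ_def by blast
lemma leL_mult: "leL (x * y) y" unfolding leL_def by blast
lemma leR_mult: "leR (x * y) x" unfolding leR_def by blast

lemma greenL_refl: "greenL x x" by (simp add: greenL_def leL_refl)
lemma greenL_sym: "greenL x y \<Longrightarrow> greenL y x" by (simp add: greenL_def)
lemma greenL_trans: "greenL x y \<Longrightarrow> greenL y z \<Longrightarrow> greenL x z"
  by (meson greenL_def leL_trans)
lemma greenR_refl: "greenR x x" by (simp add: greenR_def leR_refl)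
lemma greenR_sym: "greenR x y \<Longrightarrow> greenR y x" by (simp add: greenR_def)
lemma greenR_trans: "greenR x y \<Longrightarrow> greenR y z \<Longrightarrow> greenR x z"
  by (meson greenR_def leR_trans)

lemma LR_commute: assumes "greenL a b" "greenR b c" shows "\<exists>d. greenR a d \<and> greenL d c"
proof -
  obtain p p' where a: "a = mo p b" and b1: "b = mo p' a" using assms(1) unfolding greenL_def leL_mo by blast
  obtain q q' where c: "c = om b q" and b2: "b = om c q'" using assms(2) unfolding greenR_def leR_om by blast
  define d where "d = om a q"
  have "d = mo p c" using a c d_def by (simp add: mo_om)
  moreover have "c = mo p' d" using b1 c d_def by (simp add: mo_om)
  moreover have "a = om d q'" using a b2 \<open>d = mo p c\<close> by (simp add: mo_om)
  ultimately show ?thesis unfolding greenR_def greenL_def leR_om leL_mo using d_def by blast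
qed

lemma greenD_sym: "greenD x y \<Longrightarrow> greenD y x"
  unfolding greenD_def
proof (induction rule: rtranclp_induct)
  case base then show ?case by simp
next
  case (step y z)
  then have "(\<lambda>x y. greenR x y \<or> greenL x y) z y" using greenR_sym greenL_sym by blast
  then show ?case using step.IH by (rule converse_rtranclp_into_rtranclp)
qed
lemma greenD_trans: "greenD x y \<Longrightarrow> greenD y z \<Longrightarrow> greenD x z"
  unfolding greenD_def by simp
lemma greenD_refl: "greenD x x" unfolding greenD_def by simp
lemma greenR_D: "greenR x y \<Longrightarrow> greenD x y" unfolding greenD_def by auto
lemma greenL_D: "greenL x y \<Longrightarrow> greenD x y" unfolding greenD_def by auto

lemma greenD_J: "greenD x y \<Longrightarrow> leJ x y \<and> leJ y x"
  unfolding greenD_def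
proof (induction rule: rtranclp_induct)
  case base then show ?case by (simp add: leJ_refl)
next
  case (step y z)
  then show ?case unfolding greenR_def greenL_def
    by (meson leJ_trans leL_J leR_J)
qed

lemma greenD_RL: "greenD x y \<Longrightarrow> \<exists>z. greenR x z \<and> greenL z y"
  unfolding greenD_def
proof (induction rule: rtranclp_induct)
  case base then show ?case using greenR_refl greenL_refl by blast
next
  case (step y z)
  then obtain w where w: "greenR x w" "greenL w y" by blast
  from step(2) show ?case
  proof
    assume "greenR y z"
    then obtain d where "greenR w d" "greenL d z" using LR_commute[OF w(2)] by blast
    then show ?thesis using w greenR_trans by blast
  next
    assume "greenL y z" then show ?thesis using w greenL_trans by blast
  qed
qed

subsection \<open>Powers and idempotents\<close>

fun pw :: "'a::semigroup_mult \<Rightarrow> nat \<Rightarrow> 'a" where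
  "pw a 0 = a" | "pw a (Suc n) = pw a n * a"

lemma pw_comm: "a * pw a n = pw a n * a"
  by (induction n) (simp_all add: mult.assoc[symmetric])
lemma pw_add: "pw a m * pw a n = pw a (m + n + 1)"
proof (induction n)
  case 0 then show ?case by simp
next
  case (Suc n) then show ?case by (simp add: mult.assoc[symmetric])
qed

lemma pw_idem: "\<exists>m. pw (a::'a::{semigroup_mult,finite}) m * pw a m = pw a m"
proof -
  have "\<not> inj (pw a)"
  proof
    assume "inj (pw a)"
    then have "finite (UNIV::nat set)" using finite_imageD[of "pw a" UNIV] finite by blast
    then show False by simp
  qed
  then obtain i0 j0 where ij0: "pw a i0 = pw a j0" "i0 \<noteq> j0" unfolding inj_def by blast
  obtain i j where ij: "pw a i = pw a j" "i < j"
  proof (cases "i0 < j0")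
    case True then show ?thesis using that ij0 by blast
  next
    case False then have "j0 < i0" using ij0 by simp
    then show ?thesis using that ij0 by (metis)
  qed
  define p where "p = j - i"
  have p0: "p > 0" using ij p_def by simp
  have sh: "pw a (i + k) = pw a (i + k + p)" for k
  proof (induction k)
    case 0 then show ?case using ij p_def by simp
  next
    case (Suc k) then show ?case by (simp add: add.commute add.left_commute)
  qed
  have sh2: "pw a n = pw a (n + t * p)" if "n \<ge> i" for n t
  proof (induction t)
    case 0 then show ?case by simp
  next
    case (Suc t)
    have "pw a (n + t*p) = pw a (n + t*p + p)" using sh[of "n + t*p - i"] that by simp
    then show ?case using Suc by (simp add: algebra_simps)
  qed
  define m where "m = (i+1)*p - 1"
  have m1: "m + 1 = (i+1)*p" using p0 m_def by (simp add: Suc_leI)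
  have "(i+1)*1 \<le> (i+1)*p" using p0 by (intro mult_le_mono2) simp
  then have mi: "m \<ge> i" using m1 by simp
  have "pw a m * pw a m = pw a (m + m + 1)" by (rule pw_add)
  also have "m + m + 1 = m + (i+1)*p" using m1 by simp
  finally have "pw a m * pw a m = pw a (m + (i+1)*p)" .
  also have "\<dots> = pw a m" using sh2[OF mi, of "i+1"] by simp
  finally show ?thesis by blast
qed

lemma stabL:
  fixes x y :: "'a::{semigroup_mult,finite}"
  assumes "leL x y" "leJ y x" shows "leL y x"
proof -
  obtain s where s: "x = mo s y" using assms(1) leL_mo by blast
  show ?thesis
  proof (cases s)
    case None then show ?thesis using s by (simp add: leL_refl)
  next
    case (Some s0)
    obtain p q where yq: "y = mo p (om x q)" using assms(2) leJ_mo by blast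
    define b where "b = mo p s0"
    have bx: "b * y = mo p x" using b_def s Some by (simp add: mo_mult)
    have yb: "y = b * om y q" using yq s Some b_def by (simp add: mo_mult om_mult)
    obtain m where E: "pw b m * pw b m = pw b m" using pw_idem by blast
    have Ey: "y = pw b m * y"
    proof (cases q)
      case None
      then have y1: "b * y = y" using yb by simp
      have "y = pw b n * y" for n
      proof (induction n)
        case 0 then show ?case using y1 by simp
      next
        case (Suc n)
        have "pw b (Suc n) * y = pw b n * (b * y)" by (simp add: mult.assoc)
        also have "\<dots> = pw b n * y" using y1 by simp
        finally show ?case using Suc by simp
      qed
      then show ?thesis by blast
    next
      case (Some q0)
      then have y1: "y = b * y * q0" using yb by (simp add: mult.assoc)
      have yn: "y = pw b n * y * pw q0 n" for n
      proof (induction n)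
        case 0 then show ?case using y1 by simp
      next
        case (Suc n)
        have "pw b (Suc n) * y * pw q0 (Suc n) = pw b n * (b * y * q0) * pw q0 n"
          using pw_comm[of q0 n] by (simp add: mult.assoc)
        then show ?case using Suc y1 by simp
      qed
      have "pw b m * y = pw b m * (pw b m * y * pw q0 m)"
        by (rule arg_cong[where f="\<lambda>t. pw b m * t", OF yn[of m]])
      also have "\<dots> = (pw b m * pw b m) * y * pw q0 m" by (simp add: mult.assoc)
      also have "\<dots> = pw b m * y * pw q0 m" using E by simp
      also have "\<dots> = y" by (rule yn[symmetric])
      finally show ?thesis by simp
    qed
    show ?thesis
    proof (cases m)
      case 0 then have "y = mo p x" using Ey bx by simp
      then show ?thesis unfolding leL_mo by blast
    next
      case (Suc k)
      then have "y = pw b k * mo p x" using Ey bx by (simp add: mult.assoc)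
      then have "y = mo (Some (om (pw b k) p)) x" by (cases p) (simp_all add: mult.assoc)
      then show ?thesis unfolding leL_mo by blast
    qed
  qed
qed

locale th5 =
  fixes st :: "'a::{semigroup_mult, finite} \<Rightarrow> 'a"
    and \<alpha> :: "'a \<Rightarrow> 'a \<Rightarrow> 'r::comm_ring_1"
    and one :: "'a set \<Rightarrow> 'a"
    and \<beta> :: "'a set \<Rightarrow> 'a \<Rightarrow> 'a \<Rightarrow> 'r"
    and \<Lambda>D :: "'a set \<Rightarrow> 'l set"
    and leD :: "'a set \<Rightarrow> 'l \<Rightarrow> 'l \<Rightarrow> bool"
    and MD :: "'a set \<Rightarrow> 'l \<Rightarrow> 'm set"
    and CD :: "'a set \<Rightarrow> 'l \<Rightarrow> 'm \<Rightarrow> 'm \<Rightarrow> ('a \<Rightarrow> 'r)"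
    and u :: "'a set \<Rightarrow> 'a"
  assumes inv: "anti_involution st"
    and tw: "twisting \<alpha>"
    and A1: "\<forall>x y. \<alpha> x y = \<alpha> (st y) (st x)"
    and A2: "\<forall>D\<in>Dclasses. one D \<in> D \<and> one D * one D = one D \<and> st (one D) = one D"
    and A3_unit: "\<forall>D\<in>Dclasses. \<forall>x\<in>LD one D. \<forall>y\<in>st ` LD one D. \<beta> D x y dvd 1"
    and A3_cocycle: "\<forall>D\<in>Dclasses. \<forall>x y z.
        x \<in> LD one D \<and> y \<in> st ` LD one D \<and> x * y \<in> LD one D \<and> z \<in> st ` LD one D \<and>
        y * z \<in> st ` LD one D \<and> y \<in> LD one D \<longrightarrow>
        \<beta> D x y * \<beta> D (x * y) z = \<beta> D x (y * z) * \<beta> D y z"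
    and A3_compat: "\<forall>D\<in>Dclasses. \<forall>x y z.
        x * y \<in> LD one D \<and> z \<in> st ` LD one D \<and> y \<in> LD one D \<longrightarrow>
        \<alpha> x y * \<beta> D (x * y) z = \<alpha> x (y * z) * \<beta> D y z"
    and A3_sym: "\<forall>D\<in>Dclasses. \<forall>x y.
        x \<in> LD one D \<and> y \<in> st ` LD one D \<and> st y \<in> LD one D \<and> st x \<in> st ` LD one D \<longrightarrow>
        \<beta> D x y = \<beta> D (st y) (st x)"
    and A4: "\<forall>D\<in>Dclasses. cellular (GD st one D) (\<beta> D) st (\<Lambda>D D) (leD D) (MD D) (CD D)"
    and u_choice: "\<forall>D\<in>Dclasses. \<forall>L\<in>Lclasses D. u L \<in> L \<and> greenR (u L) (one D)"

begin

lemma st_st[simp]: "st (st x) = x" using inv unfolding anti_involution_def by blast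
lemma st_mult: "st (x * y) = st y * st x" using inv unfolding anti_involution_def by blast
lemma st_inj: "st x = st y \<longleftrightarrow> x = y" by (metis st_st)
lemma st_img: "y \<in> st ` A \<longleftrightarrow> st y \<in> A" by (metis image_iff st_st)

lemma leL_st: "leL x y \<Longrightarrow> leR (st x) (st y)"
  unfolding leL_def leR_def by (auto simp: st_mult)
lemma leR_st: "leR x y \<Longrightarrow> leL (st x) (st y)"
  unfolding leL_def leR_def by (auto simp: st_mult)
lemma leJ_st: assumes "leJ x y" shows "leJ (st x) (st y)"
proof -
  obtain p q where "x = mo p (om y q)" using assms unfolding leJ_mo by blast
  then have "st x = mo (map_option st q) (om (st y) (map_option st p))"
    by (cases p; cases q) (simp_all add: st_mult mult.assoc)
  then show ?thesis unfolding leJ_mo by blast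
qed
lemma leL_st': "leL (st x) (st y) \<longleftrightarrow> leR x y"
proof
  assume "leL (st x) (st y)" then have "leR (st (st x)) (st (st y))" by (rule leL_st)
  then show "leR x y" by (simp only: st_st)
qed (rule leR_st)
lemma leR_st': "leR (st x) (st y) \<longleftrightarrow> leL x y"
proof
  assume "leR (st x) (st y)" then have "leL (st (st x)) (st (st y))" by (rule leR_st)
  then show "leL x y" by (simp only: st_st)
qed (rule leL_st)
lemma greenL_st: "greenL x y \<longleftrightarrow> greenR (st x) (st y)"
  unfolding greenL_def greenR_def by (simp add: leR_st')
lemma greenR_st: "greenR x y \<longleftrightarrow> greenL (st x) (st y)"
  unfolding greenL_def greenR_def by (simp add: leL_st')

lemma stabR: fixes x y :: 'a assumes "leR x y" "leJ y x" shows "leR y x"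
proof -
  have "leL (st x) (st y)" using assms(1) leR_st by blast
  moreover have "leJ (st y) (st x)" using assms(2) leJ_st by blast
  ultimately have "leL (st y) (st x)" by (rule stabL)
  then show ?thesis using leL_st'[of y x] by simp
qed

lemma J_D: fixes x y :: 'a assumes "leJ x y" "leJ y x" shows "greenD x y"
proof -
  obtain p q where x: "x = mo p (om y q)" using assms(1) unfolding leJ_mo by blast
  define z where "z = om y q"
  have zy: "leR z y" unfolding z_def leR_om by blast
  have "leL x z" unfolding leL_mo using x z_def by blast
  have "leJ y z" using leJ_trans[OF assms(2) leL_J[OF \<open>leL x z\<close>]] .
  have "leR y z" using zy \<open>leJ y z\<close> by (rule stabR)
  then have "greenR z y" using zy unfolding greenR_def by simp
  have "leJ z x" using leJ_trans[OF leR_J[OF zy] assms(2)] .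
  have "leL z x" using \<open>leL x z\<close> \<open>leJ z x\<close> by (rule stabL)
  then have "greenL x z" using \<open>leL x z\<close> unfolding greenL_def by simp
  then show ?thesis using \<open>greenR z y\<close> greenL_D greenR_D greenD_trans by blast
qed

subsection \<open>D-classes and L-classes\<close>

lemma Dcl_eq: assumes "D \<in> Dclasses" "x \<in> D" shows "D = {y. greenD x y}"
proof -
  obtain x0 where D: "D = {y. greenD x0 y}" using assms(1) unfolding Dclasses_def by blast
  then have "greenD x0 x" using assms(2) by blast
  then show ?thesis using D greenD_sym greenD_trans by blast
qed
lemma Dcl_of: "{y. greenD x y} \<in> Dclasses" unfolding Dclasses_def by blast
lemma Dcl_self: "x \<in> {y. greenD x y}" using greenD_refl by blast
lemma Dcl_disj: "D \<in> Dclasses \<Longrightarrow> D' \<in> Dclasses \<Longrightarrow> x \<in> D \<Longrightarrow> x \<in> D' \<Longrightarrow> D = D'"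
  using Dcl_eq[of D x] Dcl_eq[of D' x] by simp
lemma Dcl_mem: "D \<in> Dclasses \<Longrightarrow> x \<in> D \<Longrightarrow> y \<in> D \<longleftrightarrow> greenD x y"
  using Dcl_eq[of D x] by simp

lemma Lcl_eq: assumes "L \<in> Lclasses D" "x \<in> L" shows "L = {y. greenL x y}"
proof -
  obtain x0 where D: "L = {y. greenL x0 y}" using assms(1) unfolding Lclasses_def by blast
  then have "greenL x0 x" using assms(2) by blast
  then show ?thesis using D greenL_sym greenL_trans by blast
qed
lemma Lcl_mem: assumes "L \<in> Lclasses D" "x \<in> L" shows "y \<in> L \<longleftrightarrow> greenL x y"
  using Lcl_eq[OF assms] by simp

lemma Lcl_sub: assumes "D \<in> Dclasses" "L \<in> Lclasses D" shows "L \<subseteq> D"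
proof
  fix y assume "y \<in> L"
  obtain x0 where x0: "x0 \<in> D" "L = {y. greenL x0 y}" using assms(2) unfolding Lclasses_def by blast
  then have "greenL x0 y" using \<open>y \<in> L\<close> by simp
  then show "y \<in> D" using Dcl_mem[OF assms(1) x0(1)] greenL_D by simp
qed
lemma Lcl_of: "x \<in> D \<Longrightarrow> {y. greenL x y} \<in> Lclasses D" unfolding Lclasses_def by blast

subsection \<open>The idempotent of a D-class\<close>

context
  fixes D :: "'a set" assumes D: "D \<in> Dclasses"
begin

lemma e_in: "one D \<in> D" using A2 D by blast
lemma e_idem: "one D * one D = one D" using A2 D by blast
lemma e_st: "st (one D) = one D" using A2 D by blast

lemma Le_char: "y \<in> LD one D \<longleftrightarrow> y * one D = y \<and> (\<exists>t. t * y = one D)"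
proof
  assume "y \<in> LD one D"
  then have a: "leL y (one D)" "leL (one D) y" unfolding LD_def greenL_def by auto
  from a(1) obtain p where "y = mo p (one D)" unfolding leL_mo by blast
  then have "y * one D = y" using e_idem by (simp add: mo_mult[symmetric])
  moreover have "\<exists>t. t * y = one D"
  proof -
    from a(2) have "one D = y \<or> (\<exists>s. one D = s * y)" unfolding leL_def .
    then show ?thesis
    proof
      assume "one D = y" then show ?thesis using e_idem by blast
    next
      assume "\<exists>s. one D = s * y"
      then obtain s where "one D = s * y" by blast
      then show ?thesis by (intro exI[of _ s]) simp
    qed
  qed
  ultimately show "y * one D = y \<and> (\<exists>t. t * y = one D)" by blast
next
  assume "y * one D = y \<and> (\<exists>t. t * y = one D)"
  then obtain t where "y * one D = y" "t * y = one D" by blast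
  then have "\<exists>s. one D = s*y" "\<exists>s. y = s * one D" by metis+
  then show "y \<in> LD one D" unfolding LD_def greenL_def leL_def by blast
qed

lemma Re_char: "y \<in> st ` LD one D \<longleftrightarrow> one D * y = y \<and> (\<exists>t. y * t = one D)"
proof -
  have "y \<in> st ` LD one D \<longleftrightarrow> st y \<in> LD one D" by (rule st_img)
  also have "\<dots> \<longleftrightarrow> st y * one D = st y \<and> (\<exists>t. t * st y = one D)" by (rule Le_char)
  also have "\<dots> \<longleftrightarrow> one D * y = y \<and> (\<exists>t. y * t = one D)"
  proof -
    have 1: "st y * one D = st y \<longleftrightarrow> one D * y = y"
      using st_inj[of "st y * one D" "st y"] by (simp add: st_mult e_st)
    have 2: "t * st y = one D \<longleftrightarrow> y * st t = one D" for t
      using st_inj[of "t * st y" "one D"] by (simp add: st_mult e_st)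
    have 3: "(\<exists>t. t * st y = one D) \<longleftrightarrow> (\<exists>t. y * t = one D)"
      using 2 by (metis st_st)
    show ?thesis using 1 3 by simp
  qed
  finally show ?thesis .
qed

lemma Le_greenL: "y \<in> LD one D \<longleftrightarrow> greenL (one D) y" unfolding LD_def by simp
lemma Re_greenR: "y \<in> st ` LD one D \<longleftrightarrow> greenR (one D) y"
  by (simp add: st_img Le_greenL greenL_st e_st)

lemma G_char: "g \<in> GD st one D \<longleftrightarrow> g \<in> LD one D \<and> g \<in> st ` LD one D"
  unfolding GD_def by blast

lemma LG: assumes "a \<in> LD one D" "g \<in> GD st one D" shows "a * g \<in> LD one D"
proof -
  obtain t where t: "t * a = one D" "a * one D = a" using assms(1) unfolding Le_char by blast
  have "g \<in> LD one D" "g \<in> st ` LD one D" using assms(2) unfolding G_char by auto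
  then obtain t' where t': "t' * g = one D" "g * one D = g" "one D * g = g"
    unfolding Le_char Re_char by blast
  have "a * g * one D = a * g" using t' by (simp add: mult.assoc)
  moreover have "(t' * t) * (a * g) = one D"
  proof -
    have "(t' * t) * (a * g) = t' * ((t * a) * g)" by (simp add: mult.assoc)
    then show ?thesis using t t' by simp
  qed
  ultimately show ?thesis unfolding Le_char by blast
qed

lemma GR: assumes "a \<in> st ` LD one D" "g \<in> GD st one D" shows "g * a \<in> st ` LD one D"
proof -
  have "st a \<in> LD one D" using assms(1) unfolding st_img .
  moreover have "st g \<in> GD st one D" using assms(2) unfolding G_char st_img by simp
  ultimately have "st a * st g \<in> LD one D" by (rule LG)
  then show ?thesis by (simp add: st_img st_mult)
qed

lemma GG: assumes "g \<in> GD st one D" "h \<in> GD st one D" shows "g * h \<in> GD st one D"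
  using LG GR assms unfolding G_char by blast

lemma st_G: "g \<in> GD st one D \<Longrightarrow> st g \<in> GD st one D"
  unfolding G_char st_img by auto

lemma e_G: "one D \<in> GD st one D"
  unfolding G_char Le_char Re_char using e_idem by blast

lemma u_facts: assumes "L \<in> Lclasses D"
  shows "u L \<in> L" "u L \<in> st ` LD one D" "st (u L) \<in> LD one D"
proof -
  show "u L \<in> L" using u_choice D assms by blast
  have "greenR (u L) (one D)" using u_choice D assms by blast
  then show "u L \<in> st ` LD one D" using Re_greenR greenR_sym by blast
  then show "st (u L) \<in> LD one D" using st_img by blast
qed

end
end

context th5 begin

abbreviation w :: "'a set \<Rightarrow> 'a \<Rightarrow> 'a set \<Rightarrow> 'a" where
  "w L g K \<equiv> st (u L) * g * u K"

context
  fixes D :: "'a set" assumes D: "D \<in> Dclasses"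
begin


lemma w_props:
  assumes L: "L \<in> Lclasses D" and K: "K \<in> Lclasses D" and g: "g \<in> GD st one D"
  shows "w L g K \<in> D" "greenL (w L g K) (u K)" "greenR (w L g K) (st (u L))"
proof -
  have uK: "u K \<in> st ` LD one D" using u_facts[OF D K] by blast
  then obtain bK where bK: "u K * bK = one D" "one D * u K = u K" unfolding Re_char[OF D] by blast
  have uL: "st (u L) \<in> LD one D" using u_facts[OF D L] by blast
  then obtain aL where aL: "aL * st (u L) = one D" "st (u L) * one D = st (u L)" unfolding Le_char[OF D] by blast
  have "g \<in> LD one D" "g \<in> st ` LD one D" using g unfolding G_char[OF D] by auto
  then obtain ag bg where gg: "ag * g = one D" "g * bg = one D" "g * one D = g" "one D * g = g"
    unfolding Le_char[OF D] Re_char[OF D] by blast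
  have "w L g K * (bK * bg) = st (u L) * g * (u K * bK) * bg" by (simp add: mult.assoc)
  also have "\<dots> = st (u L) * (g * bg)" using bK gg by (simp add: mult.assoc)
  also have "\<dots> = st (u L)" using gg aL by simp
  finally have r1: "w L g K * (bK * bg) = st (u L)" .
  show "greenR (w L g K) (st (u L))" unfolding greenR_def leR_def
    using r1 by (metis mult.assoc)
  have "(ag * aL) * w L g K = ag * (aL * st (u L)) * g * u K" by (simp add: mult.assoc)
  also have "\<dots> = u K" using aL gg bK by (simp add: mult.assoc)
  finally have l1: "(ag * aL) * w L g K = u K" .
  show gL: "greenL (w L g K) (u K)" unfolding greenL_def leL_def
    using l1 by (metis mult.assoc)
  have "greenR (one D) (u K)" using uK Re_greenR[OF D] by blast
  then have "greenD (one D) (w L g K)"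
    using greenD_trans[OF greenR_D greenL_D[OF greenL_sym[OF gL]]] by simp
  then show "w L g K \<in> D" using Dcl_mem[OF D e_in[OF D]] by simp
qed

lemma Lcl_eqI: assumes "L \<in> Lclasses D" "K \<in> Lclasses D" "greenL (u L) (u K)" shows "L = K"
proof (rule set_eqI)
  fix y
  have "y \<in> L \<longleftrightarrow> greenL (u L) y" using Lcl_mem[OF assms(1) u_facts(1)[OF D assms(1)]] .
  moreover have "y \<in> K \<longleftrightarrow> greenL (u K) y" using Lcl_mem[OF assms(2) u_facts(1)[OF D assms(2)]] .
  moreover have "greenL (u L) y \<longleftrightarrow> greenL (u K) y"
    using greenL_trans[OF assms(3), of y] greenL_trans[OF greenL_sym[OF assms(3)], of y] by blast
  ultimately show "y \<in> L \<longleftrightarrow> y \<in> K" by simp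
qed

lemma w_inj:
  assumes L: "L \<in> Lclasses D" and K: "K \<in> Lclasses D" and g: "g \<in> GD st one D"
    and L': "L' \<in> Lclasses D" and K': "K' \<in> Lclasses D" and g': "g' \<in> GD st one D"
    and eq: "w L g K = w L' g' K'"
  shows "L = L'" "K = K'" "g = g'"
proof -
  have a: "greenL (w L g K) (u K)" using w_props(2)[OF L K g] .
  have b: "greenL (w L g K) (u K')" using w_props(2)[OF L' K' g'] eq by simp
  have "greenL (u K) (u K')" using greenL_trans[OF greenL_sym[OF a] b] .
  then show KK: "K = K'" using Lcl_eqI K K' by blast
  have a2: "greenR (w L g K) (st (u L))" using w_props(3)[OF L K g] .
  have b2: "greenR (w L g K) (st (u L'))" using w_props(3)[OF L' K' g'] eq by simp
  have "greenR (st (u L)) (st (u L'))" using greenR_trans[OF greenR_sym[OF a2] b2] .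
  then have "greenL (u L) (u L')" using greenL_st by simp
  then show LL: "L = L'" using Lcl_eqI L L' by blast
  have uK: "u K \<in> st ` LD one D" using u_facts[OF D K] by blast
  then obtain bK where bK: "u K * bK = one D" unfolding Re_char[OF D] by blast
  have uL: "st (u L) \<in> LD one D" using u_facts[OF D L] by blast
  then obtain aL where aL: "aL * st (u L) = one D" unfolding Le_char[OF D] by blast
  have gid: "aL * w L h K * bK = h" if "h \<in> GD st one D" for h
  proof -
    have "h \<in> LD one D" "h \<in> st ` LD one D" using that unfolding G_char[OF D] by auto
    then have h: "h * one D = h" "one D * h = h" unfolding Le_char[OF D] Re_char[OF D] by auto
    have "aL * w L h K * bK = (aL * st (u L)) * h * (u K * bK)" by (simp add: mult.assoc)
    then show ?thesis using aL bK h by simp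
  qed
  have eq': "w L g K = w L g' K" using eq LL KK by simp
  have "g = aL * w L g K * bK" using gid[OF g] by simp
  then have "g = aL * w L g' K * bK" using eq' by simp
  then show "g = g'" using gid[OF g'] by simp
qed

lemma w_surj:
  assumes z: "z \<in> D"
  shows "\<exists>L\<in>Lclasses D. \<exists>g\<in>GD st one D. \<exists>K\<in>Lclasses D. z = w L g K"
proof -
  have "greenD (one D) z" using z Dcl_mem[OF D e_in[OF D]] by simp
  then obtain y where y: "greenR z y" "greenL y (one D)" using greenD_RL[OF greenD_sym] by blast
  have yD: "y \<in> D" using Dcl_mem[OF D z] y(1) greenR_D by simp
  have "greenR (st y) (one D)" using y(2) greenL_st e_st[OF D] by simp
  then have "greenD (one D) (st y)" using greenR_D[OF greenR_sym] by blast
  then have styD: "st y \<in> D" using Dcl_mem[OF D e_in[OF D]] by simp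
  define L where "L = {x. greenL (st y) x}"
  have L: "L \<in> Lclasses D" unfolding L_def using Lcl_of[OF styD] .
  have "greenL (st y) (u L)" using u_facts(1)[OF D L] unfolding L_def by simp
  then have "greenR y (st (u L))" using greenL_st by simp
  then have zL: "greenR z (st (u L))" using greenR_trans[OF y(1)] by blast
  define K where "K = {x. greenL z x}"
  have K: "K \<in> Lclasses D" unfolding K_def using Lcl_of[OF z] .
  have zK: "greenL z (u K)" using u_facts(1)[OF D K] unfolding K_def by simp
  have uK: "u K \<in> st ` LD one D" using u_facts[OF D K] by blast
  then obtain bK where bK: "u K * bK = one D" "one D * u K = u K" unfolding Re_char[OF D] by blast
  have uL: "st (u L) \<in> LD one D" using u_facts[OF D L] by blast
  then obtain aL where aL: "aL * st (u L) = one D" "st (u L) * one D = st (u L)" unfolding Le_char[OF D] by blast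
  obtain p p' where p: "z = om (st (u L)) p" "st (u L) = om z p'"
    using zL unfolding greenR_def leR_om by blast
  obtain q q' where q: "z = mo q (u K)" "u K = mo q' z"
    using zK unfolding greenL_def leL_mo by blast
  define g where "g = aL * z * bK"
  have c1: "st (u L) * aL * z = z"
  proof -
    have "st (u L) * aL * z = om (st (u L) * aL * st (u L)) p" using p(1) by (simp add: om_mult)
    also have "st (u L) * aL * st (u L) = st (u L)" using aL by (simp add: mult.assoc)
    finally show ?thesis using p(1) by simp
  qed
  have c2: "z * bK * u K = z"
  proof -
    have "z * bK * u K = mo q (u K * bK * u K)" using q(1) by (simp add: mo_mult mult.assoc)
    also have "u K * bK * u K = u K" using bK by simp
    finally show ?thesis using q(1) by simp
  qed
  have zeq: "z = w L g K"
  proof -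
    have "w L g K = (st (u L) * aL * z) * bK * u K" unfolding g_def by (simp add: mult.assoc)
    then show ?thesis using c1 c2 by simp
  qed
  have c3: "st (u L) * g = z * bK" unfolding g_def using c1 by (simp add: mult.assoc[symmetric])
  have aLz: "aL * z = om (one D) p" using p(1) aL by (simp add: om_mult[symmetric] mult.assoc[symmetric])
  have gL: "g \<in> LD one D" unfolding Le_char[OF D]
  proof
    have "g * one D = aL * (z * bK * u K) * bK" unfolding g_def bK(1)[symmetric] by (simp add: mult.assoc)
    then show "g * one D = g" using c2 unfolding g_def by simp
    have "one D = mo q' z * bK" using q(2) bK by simp
    also have "\<dots> = mo q' (st (u L) * g)" using c3 by (simp add: mo_mult)
    also have "\<dots> = mo q' (st (u L)) * g" by (simp add: mo_mult)
    finally show "\<exists>t. t * g = one D" by metis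
  qed
  have gR: "g \<in> st ` LD one D" unfolding Re_char[OF D]
  proof
    have "one D * (aL * z) = aL * z" using aLz e_idem[OF D] by (simp add: om_mult[symmetric])
    then show "one D * g = g" unfolding g_def by (simp add: mult.assoc[symmetric])
    have "aL * z = g * u K" using c2 unfolding g_def by (simp add: mult.assoc)
    have "one D = aL * om z p'" using aL p(2) by simp
    also have "\<dots> = om (aL * z) p'" by (simp add: om_mult)
    also have "\<dots> = g * om (u K) p'" using \<open>aL * z = g * u K\<close> by (simp add: om_mult)
    finally show "\<exists>t. g * t = one D" by metis
  qed
  have "g \<in> GD st one D" using gL gR G_char[OF D] by blast
  then show ?thesis using L K zeq by blast
qed

lemma Le_decomp:
  assumes v: "v \<in> LD one D"
  shows "\<exists>L\<in>Lclasses D. \<exists>h\<in>GD st one D. v = st (u L) * h"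
proof -
  have gv: "greenL (one D) v" using v Le_greenL[OF D] by blast
  then have vD: "v \<in> D" using Dcl_mem[OF D e_in[OF D]] greenL_D by simp
  obtain L g K where L: "L \<in> Lclasses D" and g: "g \<in> GD st one D" and K: "K \<in> Lclasses D"
    and veq: "v = w L g K" using w_surj[OF vD] by blast
  have "greenL v (u K)" using w_props(2)[OF L K g] veq by simp
  then have "greenL (one D) (u K)" using greenL_trans[OF gv] by blast
  then have "u K \<in> LD one D" using Le_greenL[OF D] by blast
  moreover have "u K \<in> st ` LD one D" using u_facts[OF D K] by blast
  ultimately have "u K \<in> GD st one D" using G_char[OF D] by blast
  then have "g * u K \<in> GD st one D" using GG[OF D g] by blast
  moreover have "v = st (u L) * (g * u K)" using veq by (simp add: mult.assoc)
  ultimately show ?thesis using L by blast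
qed

end
end

context th5 begin

definition LAM where "LAM = {(D, l). D \<in> Dclasses \<and> l \<in> \<Lambda>D D}"
definition LE where "LE = (\<lambda>(D1, l1) (D2, l2). lessDcl D1 D2 \<or> (D1 = D2 \<and> leD D1 l1 l2))"
definition MM where "MM = (\<lambda>(D, l). Lclasses D \<times> MD D l)"
definition CC where "CC = (\<lambda>(D, l) (L, s) (K, t). (\<lambda>z. \<Sum>g\<in>GD st one D.
        if st (u L) * g * u K = z
        then CD D l s t g * \<beta> D (st (u L)) g * \<beta> D (st (u L) * g) (u K) else 0))"
definition Phi where "Phi D L K F = (\<lambda>z. \<Sum>g\<in>GD st one D.
        if st (u L) * g * u K = z
        then F g * \<beta> D (st (u L)) g * \<beta> D (st (u L) * g) (u K) else 0)"
definition BB where "BB D L g K = \<beta> D (st (u L)) g * \<beta> D (st (u L) * g) (u K)"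
definition binv :: "'r \<Rightarrow> 'r" where "binv a = (SOME y. a * y = 1)"

lemma binv: assumes "a dvd 1" shows "a * binv a = 1"
proof -
  obtain k where "1 = a * k" using assms by (rule dvdE)
  then have "\<exists>y. a * y = 1" by (intro exI[of _ k]) simp
  then show ?thesis unfolding binv_def by (rule someI_ex)
qed

lemma CC_Phi: "CC (D, l) (L, s) (K, t) = Phi D L K (CD D l s t)"
  by (simp add: CC_def Phi_def)

lemma finite_Dclasses: "finite (Dclasses :: 'a set set)" by simp

lemma A4_unf: assumes "D \<in> Dclasses"
  shows "finite (\<Lambda>D D)" "partial_order_on_set (\<Lambda>D D) (leD D)" "\<And>l. l \<in> \<Lambda>D D \<Longrightarrow> finite (MD D l)"
   "\<And>l s t. l \<in> \<Lambda>D D \<Longrightarrow> s \<in> MD D l \<Longrightarrow> t \<in> MD D l \<Longrightarrow> CD D l s t \<in> tvec (GD st one D)"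
   "\<And>f. f \<in> tvec (GD st one D) \<Longrightarrow> \<exists>!c. (\<forall>i. i \<notin> cell_idx (\<Lambda>D D) (MD D) \<longrightarrow> c i = 0) \<and>
         f = (\<lambda>z. \<Sum>(l,s,t)\<in>cell_idx (\<Lambda>D D) (MD D). c (l,s,t) * CD D l s t z)"
   "\<And>l s t. l \<in> \<Lambda>D D \<Longrightarrow> s \<in> MD D l \<Longrightarrow> t \<in> MD D l \<Longrightarrow> tstar st (GD st one D) (CD D l s t) = CD D l t s"
   "\<And>l s a. l \<in> \<Lambda>D D \<Longrightarrow> s \<in> MD D l \<Longrightarrow> a \<in> tvec (GD st one D) \<Longrightarrow> \<exists>r. \<forall>t\<in>MD D l.
        (\<lambda>z. tmult (\<beta> D) (GD st one D) a (CD D l s t) z - (\<Sum>s'\<in>MD D l. r s' * CD D l s' t z))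
          \<in> cspan (CD D) {(m, s'', t''). (m, s'', t'') \<in> cell_idx (\<Lambda>D D) (MD D) \<and> leD D m l \<and> m \<noteq> l}"
  using A4 assms unfolding cellular_def by blast+

lemma finite_cell_idx: "finite \<Lambda> \<Longrightarrow> (\<And>l. l \<in> \<Lambda> \<Longrightarrow> finite (M l)) \<Longrightarrow> finite (cell_idx \<Lambda> M)"
  unfolding cell_idx_def by (intro finite_SigmaI) auto

lemma finite_LAM: "finite LAM"
proof -
  have "LAM \<subseteq> Sigma Dclasses \<Lambda>D" unfolding LAM_def by auto
  moreover have "finite (Sigma Dclasses \<Lambda>D)" using A4_unf(1) by (intro finite_SigmaI) auto
  ultimately show ?thesis by (rule finite_subset)
qed

lemma finite_MM: "i \<in> LAM \<Longrightarrow> finite (MM i)"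
  unfolding LAM_def MM_def using A4_unf(3) by auto

lemma finite_big: "finite (cell_idx LAM MM)"
  using finite_cell_idx finite_LAM finite_MM by blast

lemma finite_G: "finite (GD st one D)" by simp

context
  fixes D :: "'a set" assumes D: "D \<in> Dclasses"
begin

lemma BB_unit: assumes L: "L \<in> Lclasses D" and K: "K \<in> Lclasses D" and g: "g \<in> GD st one D"
  shows "BB D L g K dvd 1"
proof -
  have uL: "st (u L) \<in> LD one D" using u_facts[OF D L] by blast
  have uK: "u K \<in> st ` LD one D" using u_facts[OF D K] by blast
  have gR: "g \<in> st ` LD one D" using g G_char[OF D] by blast
  have 1: "\<beta> D (st (u L)) g dvd 1" using A3_unit D uL gR by blast
  have "st (u L) * g \<in> LD one D" using LG[OF D uL g] .
  then have 2: "\<beta> D (st (u L) * g) (u K) dvd 1" using A3_unit D uK by blast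
  show ?thesis unfolding BB_def using mult_dvd_mono[OF 1 2] by simp
qed

lemma Phi_supp: assumes L: "L \<in> Lclasses D" and K: "K \<in> Lclasses D" and z: "z \<notin> D"
  shows "Phi D L K F z = 0"
  unfolding Phi_def
proof (rule sum.neutral, rule ballI)
  fix g assume "g \<in> GD st one D"
  then have "w L g K \<in> D" using w_props(1)[OF D L K] by blast
  then show "(if w L g K = z then F g * \<beta> D (st (u L)) g * \<beta> D (st (u L) * g) (u K) else 0) = 0"
    using z by auto
qed

lemma Phi_at: assumes L: "L \<in> Lclasses D" and K: "K \<in> Lclasses D"
    and L0: "L0 \<in> Lclasses D" and K0: "K0 \<in> Lclasses D" and g0: "g0 \<in> GD st one D"
  shows "Phi D L K F (w L0 g0 K0) = (if L = L0 \<and> K = K0 then F g0 * BB D L0 g0 K0 else 0)"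
proof (cases "L = L0 \<and> K = K0")
  case True
  have "Phi D L K F (w L0 g0 K0) = (\<Sum>g\<in>GD st one D. if g0 = g then F g * BB D L0 g K0 else 0)"
    unfolding Phi_def
  proof (rule sum.cong[OF refl])
    fix g assume g: "g \<in> GD st one D"
    have "w L g K = w L0 g0 K0 \<longleftrightarrow> g0 = g"
      using w_inj(3)[OF D L K g L0 K0 g0] True by auto
    then show "(if w L g K = w L0 g0 K0 then F g * \<beta> D (st (u L)) g * \<beta> D (st (u L) * g) (u K) else 0)
       = (if g0 = g then F g * BB D L0 g K0 else 0)" using True by (simp add: BB_def mult.assoc)
  qed
  also have "\<dots> = F g0 * BB D L0 g0 K0" using g0 by simp
  finally show ?thesis using True by simp
next
  case False
  have "Phi D L K F (w L0 g0 K0) = 0"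
    unfolding Phi_def
  proof (rule sum.neutral, rule ballI)
    fix g assume g: "g \<in> GD st one D"
    have "w L g K \<noteq> w L0 g0 K0" using w_inj(1,2)[OF D L K g L0 K0 g0] False by auto
    then show "(if w L g K = w L0 g0 K0 then F g * \<beta> D (st (u L)) g * \<beta> D (st (u L) * g) (u K) else 0) = 0"
      by simp
  qed
  then show ?thesis using False by (simp add: if_not_P[OF False])
qed

end

lemma big_mem: "((D, l), (L, s), (K, t)) \<in> cell_idx LAM MM \<longleftrightarrow>
   D \<in> Dclasses \<and> l \<in> \<Lambda>D D \<and> L \<in> Lclasses D \<and> K \<in> Lclasses D \<and> s \<in> MD D l \<and> t \<in> MD D l"
  unfolding cell_idx_def LAM_def MM_def by auto

lemma EVAL:
  assumes D0: "D0 \<in> Dclasses" and L0: "L0 \<in> Lclasses D0" and K0: "K0 \<in> Lclasses D0"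
    and g0: "g0 \<in> GD st one D0"
  shows "(\<Sum>(l,s,t)\<in>cell_idx LAM MM. c (l,s,t) * CC l s t (w L0 g0 K0)) =
     BB D0 L0 g0 K0 * (\<Sum>(l,s,t)\<in>cell_idx (\<Lambda>D D0) (MD D0). c ((D0,l),(L0,s),(K0,t)) * CD D0 l s t g0)"
proof -
  define emb where "emb = (\<lambda>(l::'l, s::'m, t::'m). ((D0, l), (L0, s), (K0, t)))"
  let ?F = "\<lambda>(l,s,t). c (l,s,t) * CC l s t (w L0 g0 K0)"
  let ?small = "cell_idx (\<Lambda>D D0) (MD D0)"
  have sub: "emb ` ?small \<subseteq> cell_idx LAM MM"
    unfolding emb_def cell_idx_def LAM_def MM_def using D0 L0 K0 by auto
  have z0: "?F i = 0" if i: "i \<in> cell_idx LAM MM - emb ` ?small" for i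
  proof -
    obtain D l L s K t where ieq: "i = ((D, l), (L, s), (K, t))" by (metis prod.collapse)
    have im: "D \<in> Dclasses" "l \<in> \<Lambda>D D" "L \<in> Lclasses D" "K \<in> Lclasses D" "s \<in> MD D l" "t \<in> MD D l"
      using i ieq big_mem by auto
    have "CC (D, l) (L, s) (K, t) (w L0 g0 K0) = 0"
    proof (cases "D = D0")
      case False
      have "w L0 g0 K0 \<in> D0" using w_props(1)[OF D0 L0 K0 g0] .
      then have "w L0 g0 K0 \<notin> D" using Dcl_disj[OF im(1) D0] False by blast
      then show ?thesis unfolding CC_Phi using Phi_supp[OF im(1) im(3) im(4)] by blast
    next
      case True
      have "\<not> (L = L0 \<and> K = K0)"
      proof
        assume "L = L0 \<and> K = K0"
        then have "i = emb (l, s, t)" unfolding emb_def ieq using True by simp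
        moreover have "(l, s, t) \<in> ?small" unfolding cell_idx_def using im True by auto
        ultimately show False using i by blast
      qed
      then show ?thesis unfolding CC_Phi
        using Phi_at[OF D0 im(3)[unfolded True] im(4)[unfolded True] L0 K0 g0] True
        by (simp add: if_not_P)
    qed
    then show ?thesis using ieq by simp
  qed
  have "(\<Sum>i\<in>cell_idx LAM MM. ?F i) = (\<Sum>i\<in>emb ` ?small. ?F i)"
    using sum.mono_neutral_right[OF finite_big sub] z0 by blast
  also have "\<dots> = (\<Sum>j\<in>?small. ?F (emb j))"
    by (rule sum.reindex[unfolded comp_def]) (auto simp: inj_on_def emb_def)
  also have "\<dots> = (\<Sum>(l,s,t)\<in>?small. BB D0 L0 g0 K0 * (c ((D0,l),(L0,s),(K0,t)) * CD D0 l s t g0))"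
  proof (rule sum.cong[OF refl])
    fix j assume j: "j \<in> ?small"
    obtain l s t where jeq: "j = (l, s, t)" by (metis prod.collapse)
    have "l \<in> \<Lambda>D D0" using j jeq unfolding cell_idx_def by auto
    show "?F (emb j) = (case j of (l,s,t) \<Rightarrow> BB D0 L0 g0 K0 * (c ((D0,l),(L0,s),(K0,t)) * CD D0 l s t g0))"
      unfolding jeq emb_def using Phi_at[OF D0 L0 K0 L0 K0 g0] by (simp add: CC_Phi mult_ac)
  qed
  also have "\<dots> = BB D0 L0 g0 K0 * (\<Sum>(l,s,t)\<in>?small. c ((D0,l),(L0,s),(K0,t)) * CD D0 l s t g0)"
    by (simp add: sum_distrib_left case_prod_beta)
  finally show ?thesis .
qed

end

context th5 begin

definition PA where "PA D c F \<longleftrightarrow> (\<forall>i. i \<notin> cell_idx (\<Lambda>D D) (MD D) \<longrightarrow> c i = 0) \<and>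
         F = (\<lambda>z. \<Sum>(l,s,t)\<in>cell_idx (\<Lambda>D D) (MD D). c (l,s,t) * CD D l s t z)"
definition psi where "psi D L K f = (\<lambda>g. if g \<in> GD st one D then f (w L g K) * binv (BB D L g K) else 0)"
definition coefA where "coefA D L K f = (THE c. PA D c (psi D L K f))"
definition cf where "cf f = (\<lambda>i. if i \<in> cell_idx LAM MM then
    (case i of ((D,l),(L,s),(K,t)) \<Rightarrow> coefA D L K f (l,s,t)) else 0)"

lemma psi_tvec: "psi D L K f \<in> tvec (GD st one D)"
  unfolding psi_def tvec_def by simp

lemma PA_ex1: "D \<in> Dclasses \<Longrightarrow> \<exists>!c. PA D c (psi D L K f)"
  unfolding PA_def using A4_unf(5)[OF _ psi_tvec] by blast

lemma coefA: "D \<in> Dclasses \<Longrightarrow> PA D (coefA D L K f) (psi D L K f)"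
  unfolding coefA_def by (rule theI'[OF PA_ex1])

lemma coefA_unique: "D \<in> Dclasses \<Longrightarrow> PA D c (psi D L K f) \<Longrightarrow> c = coefA D L K f"
  unfolding coefA_def by (rule the1_equality[OF PA_ex1, symmetric])

lemma REP:
  assumes f: "f = (\<lambda>z. \<Sum>(l,s,t)\<in>cell_idx LAM MM. c (l,s,t) * CC l s t z)"
    and D: "D \<in> Dclasses" and L: "L \<in> Lclasses D" and K: "K \<in> Lclasses D"
  shows "PA D (\<lambda>(l,s,t). if (l,s,t) \<in> cell_idx (\<Lambda>D D) (MD D) then c ((D,l),(L,s),(K,t)) else 0) (psi D L K f)"
  unfolding PA_def
proof (intro conjI allI impI ext)
  fix i assume "i \<notin> cell_idx (\<Lambda>D D) (MD D)"
  then show "(case i of (l,s,t) \<Rightarrow> if (l,s,t) \<in> cell_idx (\<Lambda>D D) (MD D) then c ((D,l),(L,s),(K,t)) else 0) = 0"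
    by (auto split: prod.splits)
next
  fix g
  let ?c' = "\<lambda>(l,s,t). if (l,s,t) \<in> cell_idx (\<Lambda>D D) (MD D) then c ((D,l),(L,s),(K,t)) else 0"
  have eq1: "(\<Sum>(l,s,t)\<in>cell_idx (\<Lambda>D D) (MD D). ?c' (l,s,t) * CD D l s t g) =
        (\<Sum>(l,s,t)\<in>cell_idx (\<Lambda>D D) (MD D). c ((D,l),(L,s),(K,t)) * CD D l s t g)"
    by (rule sum.cong[OF refl]) (auto split: prod.splits)
  show "psi D L K f g = (\<Sum>(l,s,t)\<in>cell_idx (\<Lambda>D D) (MD D). ?c' (l,s,t) * CD D l s t g)"
  proof (cases "g \<in> GD st one D")
    case True
    have "f (w L g K) = BB D L g K * (\<Sum>(l,s,t)\<in>cell_idx (\<Lambda>D D) (MD D). c ((D,l),(L,s),(K,t)) * CD D l s t g)"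
      using EVAL[OF D L K True, of c] f by simp
    then have "psi D L K f g = (BB D L g K * binv (BB D L g K)) *
       (\<Sum>(l,s,t)\<in>cell_idx (\<Lambda>D D) (MD D). c ((D,l),(L,s),(K,t)) * CD D l s t g)"
      unfolding psi_def using True by (simp add: mult_ac)
    also have "BB D L g K * binv (BB D L g K) = 1" using binv[OF BB_unit[OF D L K True]] .
    finally show ?thesis using eq1 by simp
  next
    case False
    have "(\<Sum>(l,s,t)\<in>cell_idx (\<Lambda>D D) (MD D). c ((D,l),(L,s),(K,t)) * CD D l s t g) = 0"
    proof (rule sum.neutral, rule ballI)
      fix j assume j: "j \<in> cell_idx (\<Lambda>D D) (MD D)"
      obtain l s t where jeq: "j = (l,s,t)" by (metis prod.collapse)
      have "l \<in> \<Lambda>D D" "s \<in> MD D l" "t \<in> MD D l" using j jeq unfolding cell_idx_def by auto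
      then have "CD D l s t \<in> tvec (GD st one D)" using A4_unf(4)[OF D] by blast
      then have "CD D l s t g = 0" using False unfolding tvec_def by blast
      then show "(case j of (l,s,t) \<Rightarrow> c ((D,l),(L,s),(K,t)) * CD D l s t g) = 0" using jeq by simp
    qed
    then show ?thesis using eq1 False unfolding psi_def by simp
  qed
qed

lemma C1_basis: "\<forall>f\<in>tvec (UNIV::'a set). \<exists>!c. (\<forall>i. i \<notin> cell_idx LAM MM \<longrightarrow> c i = 0) \<and>
         f = (\<lambda>z. \<Sum>(l,s,t)\<in>cell_idx LAM MM. c (l,s,t) * CC l s t z)"
proof (intro ballI ex1I)
  fix f :: "'a \<Rightarrow> 'r"
  show "(\<forall>i. i \<notin> cell_idx LAM MM \<longrightarrow> cf f i = 0) \<and>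
         f = (\<lambda>z. \<Sum>(l,s,t)\<in>cell_idx LAM MM. cf f (l,s,t) * CC l s t z)"
  proof (intro conjI allI impI ext)
    fix i assume "i \<notin> cell_idx LAM MM" then show "cf f i = 0" unfolding cf_def by simp
  next
    fix z :: 'a
    define D0 where "D0 = {y. greenD z y}"
    have D0: "D0 \<in> Dclasses" unfolding D0_def by (rule Dcl_of)
    have zD: "z \<in> D0" unfolding D0_def by (rule Dcl_self)
    obtain L0 g0 K0 where L0: "L0 \<in> Lclasses D0" and g0: "g0 \<in> GD st one D0" and K0: "K0 \<in> Lclasses D0"
      and zeq: "z = w L0 g0 K0" using w_surj[OF D0 zD] by blast
    have "(\<Sum>(l,s,t)\<in>cell_idx LAM MM. cf f (l,s,t) * CC l s t z) =
       BB D0 L0 g0 K0 * (\<Sum>(l,s,t)\<in>cell_idx (\<Lambda>D D0) (MD D0). cf f ((D0,l),(L0,s),(K0,t)) * CD D0 l s t g0)"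
      unfolding zeq by (rule EVAL[OF D0 L0 K0 g0])
    also have "(\<Sum>(l,s,t)\<in>cell_idx (\<Lambda>D D0) (MD D0). cf f ((D0,l),(L0,s),(K0,t)) * CD D0 l s t g0) =
       (\<Sum>(l,s,t)\<in>cell_idx (\<Lambda>D D0) (MD D0). coefA D0 L0 K0 f (l,s,t) * CD D0 l s t g0)"
    proof (rule sum.cong[OF refl])
      fix j assume j: "j \<in> cell_idx (\<Lambda>D D0) (MD D0)"
      obtain l s t where jeq: "j = (l,s,t)" by (metis prod.collapse)
      have "((D0,l),(L0,s),(K0,t)) \<in> cell_idx LAM MM"
        using j jeq D0 L0 K0 unfolding big_mem by (auto simp: cell_idx_def)
      then show "(case j of (l,s,t) \<Rightarrow> cf f ((D0,l),(L0,s),(K0,t)) * CD D0 l s t g0) =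
          (case j of (l,s,t) \<Rightarrow> coefA D0 L0 K0 f (l,s,t) * CD D0 l s t g0)"
        using jeq unfolding cf_def by simp
    qed
    also have "\<dots> = psi D0 L0 K0 f g0"
      using coefA[OF D0, of L0 K0 f] unfolding PA_def by (metis (no_types, lifting))
    also have "\<dots> = f z * binv (BB D0 L0 g0 K0)" unfolding psi_def zeq using g0 by simp
    finally show "f z = (\<Sum>(l,s,t)\<in>cell_idx LAM MM. cf f (l,s,t) * CC l s t z)"
      using binv[OF BB_unit[OF D0 L0 K0 g0]] by (simp add: mult_ac)
  qed
next
  fix f :: "'a \<Rightarrow> 'r" and c
  assume c: "(\<forall>i. i \<notin> cell_idx LAM MM \<longrightarrow> c i = 0) \<and>
         f = (\<lambda>z. \<Sum>(l,s,t)\<in>cell_idx LAM MM. c (l,s,t) * CC l s t z)"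
  show "c = cf f"
  proof (rule ext)
    fix i
    show "c i = cf f i"
    proof (cases "i \<in> cell_idx LAM MM")
      case False
      then have "c i = 0" using conjunct1[OF c] by blast
      then show ?thesis using False unfolding cf_def by simp
    next
      case True
      obtain D l L s K t where ieq: "i = ((D,l),(L,s),(K,t))" by (metis prod.collapse)
      have im: "D \<in> Dclasses" "l \<in> \<Lambda>D D" "L \<in> Lclasses D" "K \<in> Lclasses D" "s \<in> MD D l" "t \<in> MD D l"
        using True ieq big_mem by auto
      have E: "(\<lambda>(l,s,t). if (l,s,t) \<in> cell_idx (\<Lambda>D D) (MD D) then c ((D,l),(L,s),(K,t)) else 0) = coefA D L K f"
        using coefA_unique[OF im(1) REP[OF conjunct2[OF c] im(1) im(3) im(4)]] .
      have "(if (l,s,t) \<in> cell_idx (\<Lambda>D D) (MD D) then c ((D,l),(L,s),(K,t)) else 0) = coefA D L K f (l,s,t)"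
        using fun_cong[OF E, of "(l,s,t)"] by (simp only: prod.case)
      moreover have "(l,s,t) \<in> cell_idx (\<Lambda>D D) (MD D)" using im unfolding cell_idx_def by auto
      ultimately show ?thesis using True ieq unfolding cf_def by simp
    qed
  qed
qed

end

context th5 begin

lemma same_D_J: "(D::'a set) \<in> Dclasses \<Longrightarrow> x \<in> D \<Longrightarrow> y \<in> D \<Longrightarrow> leJ x y"
  using Dcl_mem greenD_J by blast

lemma leDcl_antisym: fixes D1 D2 :: "'a set" assumes "D1 \<in> Dclasses" "D2 \<in> Dclasses" "leDcl D1 D2" "leDcl D2 D1" shows "D1 = D2"
proof -
  obtain x1 y2 where a: "x1 \<in> D1" "y2 \<in> D2" "leJ x1 y2" using assms(3) unfolding leDcl_def by blast
  obtain x2 y1 where b: "x2 \<in> D2" "y1 \<in> D1" "leJ x2 y1" using assms(4) unfolding leDcl_def by blast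
  have "leJ y2 x2" using same_D_J[OF assms(2) a(2) b(1)] .
  moreover have "leJ y1 x1" using same_D_J[OF assms(1) b(2) a(1)] .
  ultimately have "leJ y2 x1" using leJ_trans[OF leJ_trans[OF \<open>leJ y2 x2\<close> b(3)] \<open>leJ y1 x1\<close>] by simp
  then have "greenD x1 y2" using J_D[OF a(3)] by simp
  then have "y2 \<in> D1" using Dcl_mem[OF assms(1) a(1)] by simp
  then show ?thesis using Dcl_disj[OF assms(1) assms(2) _ a(2)] by simp
qed

lemma leDcl_trans: fixes D1 D2 D3 :: "'a set" assumes "D2 \<in> Dclasses" "leDcl D1 D2" "leDcl D2 D3" shows "leDcl D1 D3"
proof -
  obtain x1 y2 where a: "x1 \<in> D1" "y2 \<in> D2" "leJ x1 y2" using assms(2) unfolding leDcl_def by blast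
  obtain x2 y3 where b: "x2 \<in> D2" "y3 \<in> D3" "leJ x2 y3" using assms(3) unfolding leDcl_def by blast
  have "leJ x1 y3" using leJ_trans[OF leJ_trans[OF a(3) same_D_J[OF assms(1) a(2) b(1)]] b(3)] .
  then show ?thesis using a(1) b(2) unfolding leDcl_def by blast
qed

lemma po_LAM: "partial_order_on_set LAM LE"
  unfolding partial_order_on_set_def
proof (intro conjI ballI impI)
  fix x assume "x \<in> LAM"
  then obtain D l where x: "x = (D,l)" "D \<in> Dclasses" "l \<in> \<Lambda>D D" unfolding LAM_def by blast
  then show "LE x x" using A4_unf(2)[OF x(2)] unfolding LE_def partial_order_on_set_def by simp
next
  fix x y assume xy: "x \<in> LAM" "y \<in> LAM" "LE x y \<and> LE y x"
  obtain D1 l1 where x: "x = (D1,l1)" "D1 \<in> Dclasses" "l1 \<in> \<Lambda>D D1" using xy(1) unfolding LAM_def by blast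
  obtain D2 l2 where y: "y = (D2,l2)" "D2 \<in> Dclasses" "l2 \<in> \<Lambda>D D2" using xy(2) unfolding LAM_def by blast
  have h: "lessDcl D1 D2 \<or> (D1 = D2 \<and> leD D1 l1 l2)" "lessDcl D2 D1 \<or> (D2 = D1 \<and> leD D2 l2 l1)"
    using xy(3) x y unfolding LE_def by auto
  show "x = y"
  proof (cases "D1 = D2")
    case True
    then have "leD D1 l1 l2" "leD D1 l2 l1" using h unfolding lessDcl_def by auto
    then have "l1 = l2" using A4_unf(2)[OF x(2)] x(3) y(3) True unfolding partial_order_on_set_def by blast
    then show ?thesis using x y True by simp
  next
    case False
    then have "leDcl D1 D2" "leDcl D2 D1" using h unfolding lessDcl_def by auto
    then show ?thesis using leDcl_antisym[OF x(2) y(2)] False by blast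
  qed
next
  fix x y z assume xyz: "x \<in> LAM" "y \<in> LAM" "z \<in> LAM" "LE x y \<and> LE y z"
  obtain D1 l1 where x: "x = (D1,l1)" "D1 \<in> Dclasses" "l1 \<in> \<Lambda>D D1" using xyz(1) unfolding LAM_def by blast
  obtain D2 l2 where y: "y = (D2,l2)" "D2 \<in> Dclasses" "l2 \<in> \<Lambda>D D2" using xyz(2) unfolding LAM_def by blast
  obtain D3 l3 where z: "z = (D3,l3)" "D3 \<in> Dclasses" "l3 \<in> \<Lambda>D D3" using xyz(3) unfolding LAM_def by blast
  have h: "lessDcl D1 D2 \<or> (D1 = D2 \<and> leD D1 l1 l2)" "lessDcl D2 D3 \<or> (D2 = D3 \<and> leD D2 l2 l3)"
    using xyz(4) x y z unfolding LE_def by auto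
  have "lessDcl D1 D3 \<or> (D1 = D3 \<and> leD D1 l1 l3)"
  proof (cases "D1 = D2")
    case T12: True
    show ?thesis
    proof (cases "D2 = D3")
      case True
      then have "leD D1 l1 l2" "leD D1 l2 l3" using h T12 unfolding lessDcl_def by auto
      then have "leD D1 l1 l3" using A4_unf(2)[OF x(2)] x(3) y(3) z(3) T12 True
        unfolding partial_order_on_set_def by blast
      then show ?thesis using T12 True by simp
    next
      case False
      then show ?thesis using h T12 by simp
    qed
  next
    case F12: False
    then have l12: "leDcl D1 D2" using h unfolding lessDcl_def by auto
    have l23: "leDcl D2 D3"
    proof (cases "D2 = D3")
      case True
      have "one D2 \<in> D2" using e_in[OF y(2)] .
      then show ?thesis using True leJ_refl unfolding leDcl_def by blast
    next
      case False then show ?thesis using h unfolding lessDcl_def by auto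
    qed
    have l13: "leDcl D1 D3" using leDcl_trans[OF y(2) l12 l23] .
    have "D1 \<noteq> D3"
    proof
      assume "D1 = D3"
      then have "leDcl D2 D1" using l23 by simp
      then show False using leDcl_antisym[OF x(2) y(2) l12] F12 by blast
    qed
    then show ?thesis using l13 unfolding lessDcl_def by simp
  qed
  then show "LE x z" using x z unfolding LE_def by simp
qed

end

context th5 begin

lemma bij_st: "bij_betw st A (st ` A)" by (rule inj_on_imp_bij_betw) (simp add: inj_on_def st_inj)
lemma st_UNIV: "st ` UNIV = UNIV" by (metis surj_def st_st)
lemma st_GD: "D \<in> Dclasses \<Longrightarrow> st ` GD st one D = GD st one D"
proof
  assume D: "D \<in> Dclasses"
  show "st ` GD st one D \<subseteq> GD st one D" using st_G[OF D] by blast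
  show "GD st one D \<subseteq> st ` GD st one D"
  proof
    fix g assume "g \<in> GD st one D"
    then have "st g \<in> GD st one D" using st_G[OF D] by blast
    then show "g \<in> st ` GD st one D" by (metis image_eqI st_st)
  qed
qed

lemma alg_inv: "alg_anti_involution \<alpha> UNIV st"
  unfolding alg_anti_involution_def
proof (intro conjI ballI allI impI)
  fix c :: 'r and f h :: "'a \<Rightarrow> 'r"
  show "tstar st UNIV (\<lambda>z. c * f z + h z) = (\<lambda>z. c * tstar st UNIV f z + tstar st UNIV h z)"
    unfolding tstar_def by simp
next
  fix f :: "'a \<Rightarrow> 'r"
  show "tstar st UNIV (tstar st UNIV f) = f" unfolding tstar_def by simp
next
  fix f h :: "'a \<Rightarrow> 'r"
  show "tstar st UNIV (tmult \<alpha> UNIV f h) = tmult \<alpha> UNIV (tstar st UNIV h) (tstar st UNIV f)"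
  proof (rule ext)
    fix z :: 'a
    have "tmult \<alpha> UNIV (tstar st UNIV h) (tstar st UNIV f) z =
      (\<Sum>x\<in>UNIV. \<Sum>y\<in>UNIV. if x * y = z then \<alpha> x y * h (st x) * f (st y) else 0)"
      unfolding tmult_def tstar_def by (simp only: UNIV_I if_True)
    also have "\<dots> = (\<Sum>y\<in>UNIV. \<Sum>x\<in>UNIV. if x * y = z then \<alpha> x y * h (st x) * f (st y) else 0)"
      by (rule sum.swap)
    also have "\<dots> = (\<Sum>a\<in>UNIV. \<Sum>x\<in>UNIV. if x * st a = z then \<alpha> x (st a) * h (st x) * f (st (st a)) else 0)"
      using sum.reindex_bij_betw[OF bij_st[of UNIV], unfolded st_UNIV,
         of "\<lambda>y. \<Sum>x\<in>UNIV. if x * y = z then \<alpha> x y * h (st x) * f (st y) else 0"] by simp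
    also have "\<dots> = (\<Sum>a\<in>UNIV. \<Sum>b\<in>UNIV. if st b * st a = z then \<alpha> (st b) (st a) * h (st (st b)) * f (st (st a)) else 0)"
    proof (rule sum.cong[OF refl])
      fix a
      show "(\<Sum>x\<in>UNIV. if x * st a = z then \<alpha> x (st a) * h (st x) * f (st (st a)) else 0) =
          (\<Sum>b\<in>UNIV. if st b * st a = z then \<alpha> (st b) (st a) * h (st (st b)) * f (st (st a)) else 0)"
      using sum.reindex_bij_betw[OF bij_st[of UNIV], unfolded st_UNIV,
         of "\<lambda>x. if x * st a = z then \<alpha> x (st a) * h (st x) * f (st (st a)) else 0"] by simp
    qed
    also have "\<dots> = (\<Sum>a\<in>UNIV. \<Sum>b\<in>UNIV. if a * b = st z then \<alpha> a b * f a * h b else 0)"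
    proof (intro sum.cong[OF refl])
      fix a b
      have 1: "st b * st a = z \<longleftrightarrow> a * b = st z" using st_inj[of "a * b" "st z"] by (simp add: st_mult)
      have 2: "\<alpha> (st b) (st a) = \<alpha> a b" using A1 by simp
      show "(if st b * st a = z then \<alpha> (st b) (st a) * h (st (st b)) * f (st (st a)) else 0) =
            (if a * b = st z then \<alpha> a b * f a * h b else 0)" using 1 2 by (simp add: mult_ac)
    qed
    also have "\<dots> = tstar st UNIV (tmult \<alpha> UNIV f h) z" unfolding tstar_def tmult_def by (simp only: UNIV_I if_True)
    finally show "tstar st UNIV (tmult \<alpha> UNIV f h) z = tmult \<alpha> UNIV (tstar st UNIV h) (tstar st UNIV f) z" by simp
  qed
qed

lemma CC_star:
  assumes D: "D \<in> Dclasses" and l: "l \<in> \<Lambda>D D" and L: "L \<in> Lclasses D" and K: "K \<in> Lclasses D"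
    and s: "s \<in> MD D l" and t: "t \<in> MD D l"
  shows "tstar st UNIV (CC (D,l) (L,s) (K,t)) = CC (D,l) (K,t) (L,s)"
proof (rule ext)
  fix z :: 'a
  let ?G = "GD st one D"
  have uL: "u L \<in> st ` LD one D" "st (u L) \<in> LD one D" using u_facts[OF D L] by auto
  have uK: "u K \<in> st ` LD one D" "st (u K) \<in> LD one D" using u_facts[OF D K] by auto
  have "tstar st UNIV (CC (D,l) (L,s) (K,t)) z = (\<Sum>g\<in>?G. if st (u L) * g * u K = st z
        then CD D l s t g * \<beta> D (st (u L)) g * \<beta> D (st (u L) * g) (u K) else 0)"
    unfolding tstar_def by (simp only: UNIV_I if_True) (simp add: CC_def)
  also have "\<dots> = (\<Sum>h\<in>?G. if st (u L) * st h * u K = st z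
        then CD D l s t (st h) * \<beta> D (st (u L)) (st h) * \<beta> D (st (u L) * st h) (u K) else 0)"
    using sum.reindex_bij_betw[OF bij_st[of ?G], unfolded st_GD[OF D],
      of "\<lambda>g. if st (u L) * g * u K = st z
        then CD D l s t g * \<beta> D (st (u L)) g * \<beta> D (st (u L) * g) (u K) else 0"] by simp
  also have "\<dots> = (\<Sum>h\<in>?G. if st (u K) * h * u L = z
        then CD D l t s h * \<beta> D (st (u K)) h * \<beta> D (st (u K) * h) (u L) else 0)"
  proof (rule sum.cong[OF refl])
    fix h assume h: "h \<in> ?G"
    have sh: "st h \<in> ?G" using st_G[OF D h] .
    have hL: "h \<in> LD one D" "h \<in> st ` LD one D" using h G_char[OF D] by auto
    have shL: "st h \<in> LD one D" "st h \<in> st ` LD one D" using sh G_char[OF D] by auto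
    have c1: "st (u L) * st h * u K = st z \<longleftrightarrow> st (u K) * h * u L = z"
      using st_inj[of "st (u K) * h * u L" z] by (simp add: st_mult mult.assoc)
    have c2: "CD D l s t (st h) = CD D l t s h"
      using fun_cong[OF A4_unf(6)[OF D l s t], of h] h unfolding tstar_def by simp
    have b1: "\<beta> D h (u L) = \<beta> D (st (u L)) (st h)"
      using A3_sym D hL(1) uL shL(2) by blast
    have x1: "st (u L) * st h \<in> LD one D" using LG[OF D uL(2) sh] .
    have x2: "h * u L \<in> st ` LD one D" using GR[OF D uL(1) h] .
    have "st (st (u L) * st h) = h * u L" by (simp add: st_mult)
    then have b2: "\<beta> D (st (u L) * st h) (u K) = \<beta> D (st (u K)) (h * u L)"
      using A3_sym D x1 uK x2 by metis
    have x3: "st (u K) * h \<in> LD one D" using LG[OF D uK(2) h] .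
    have b3: "\<beta> D (st (u K)) h * \<beta> D (st (u K) * h) (u L) = \<beta> D (st (u K)) (h * u L) * \<beta> D h (u L)"
      using A3_cocycle D uK(2) hL x3 uL(1) x2 by blast
    show "(if st (u L) * st h * u K = st z
        then CD D l s t (st h) * \<beta> D (st (u L)) (st h) * \<beta> D (st (u L) * st h) (u K) else 0) =
        (if st (u K) * h * u L = z
        then CD D l t s h * \<beta> D (st (u K)) h * \<beta> D (st (u K) * h) (u L) else 0)"
      using c1 c2 b1 b2 b3 by (simp add: mult_ac)
  qed
  also have "\<dots> = CC (D,l) (K,t) (L,s) z" unfolding CC_def by simp
  finally show "tstar st UNIV (CC (D,l) (L,s) (K,t)) z = CC (D,l) (K,t) (L,s) z" .
qed

end

lemma cspan_alt: "f \<in> cspan C J \<longleftrightarrow> (\<exists>c. f = (\<lambda>z. \<Sum>j\<in>J. c j * (case j of (l,s,t) \<Rightarrow> C l s t z)))"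
proof -
  have "(\<lambda>(l,s,t). c (l,s,t) * C l s t z) = (\<lambda>j. c j * (case j of (l,s,t) \<Rightarrow> C l s t z))" for c z
    by (auto split: prod.splits)
  then show ?thesis unfolding cspan_def by simp
qed

lemma cspan_comb:
  assumes "finite J" "finite I" "\<And>i. i \<in> I \<Longrightarrow> F i \<in> cspan C J"
  shows "(\<lambda>z. \<Sum>i\<in>I. a i * F i z) \<in> cspan C J"
proof -
  have "\<forall>i\<in>I. \<exists>c. F i = (\<lambda>z. \<Sum>j\<in>J. c j * (case j of (l,s,t) \<Rightarrow> C l s t z))"
    using assms(3) cspan_alt by blast
  from bchoice[OF this] obtain c where c0: "\<forall>i\<in>I. F i = (\<lambda>z. \<Sum>j\<in>J. c i j * (case j of (l,s,t) \<Rightarrow> C l s t z))"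
    by blast
  then have c: "\<And>i. i \<in> I \<Longrightarrow> F i = (\<lambda>z. \<Sum>j\<in>J. c i j * (case j of (l,s,t) \<Rightarrow> C l s t z))"
    by blast
  have "(\<lambda>z. \<Sum>i\<in>I. a i * F i z) = (\<lambda>z. \<Sum>j\<in>J. (\<Sum>i\<in>I. a i * c i j) * (case j of (l,s,t) \<Rightarrow> C l s t z))"
  proof (rule ext)
    fix z
    have "(\<Sum>i\<in>I. a i * F i z) = (\<Sum>i\<in>I. \<Sum>j\<in>J. a i * (c i j * (case j of (l,s,t) \<Rightarrow> C l s t z)))"
      using c by (simp add: sum_distrib_left)
    also have "\<dots> = (\<Sum>j\<in>J. \<Sum>i\<in>I. a i * (c i j * (case j of (l,s,t) \<Rightarrow> C l s t z)))"
      by (rule sum.swap)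
    also have "\<dots> = (\<Sum>j\<in>J. (\<Sum>i\<in>I. a i * c i j) * (case j of (l,s,t) \<Rightarrow> C l s t z))"
      by (simp add: sum_distrib_right mult.assoc)
    finally show "(\<Sum>i\<in>I. a i * F i z) = (\<Sum>j\<in>J. (\<Sum>i\<in>I. a i * c i j) * (case j of (l,s,t) \<Rightarrow> C l s t z))" .
  qed
  then show ?thesis unfolding cspan_alt by (intro exI[where x="\<lambda>j. \<Sum>i\<in>I. a i * c i j"])
qed

lemma cspan_basis:
  assumes "finite J" "(l,s,t) \<in> J"
  shows "C l s t \<in> cspan C J"
proof -
  have "C l s t = (\<lambda>z. \<Sum>j\<in>J. (if j = (l,s,t) then 1 else 0) * (case j of (l,s,t) \<Rightarrow> C l s t z))"
  proof (rule ext)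
    fix z
    have "(\<Sum>j\<in>J. (if j = (l,s,t) then 1 else 0) * (case j of (l,s,t) \<Rightarrow> C l s t z)) =
        (\<Sum>j\<in>J. if j = (l,s,t) then (case j of (l,s,t) \<Rightarrow> C l s t z) else 0)"
      by (rule sum.cong[OF refl]) simp
    also have "\<dots> = C l s t z" using assms by simp
    finally show "C l s t z = (\<Sum>j\<in>J. (if j = (l,s,t) then 1 else 0) * (case j of (l,s,t) \<Rightarrow> C l s t z))" by simp
  qed
  then show ?thesis unfolding cspan_alt by (intro exI[where x="\<lambda>j. if j = (l,s,t) then 1 else 0"])
qed

lemma cspan_sub:
  assumes "finite J" "finite I" "I \<subseteq> J"
  shows "(\<lambda>z. \<Sum>j\<in>I. c j * (case j of (l,s,t) \<Rightarrow> C l s t z)) \<in> cspan C J"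
proof (rule cspan_comb[OF assms(1,2)])
  fix i assume "i \<in> I"
  then have "i \<in> J" using assms(3) by blast
  obtain l s t where "i = (l,s,t)" by (metis prod.collapse)
  then show "(\<lambda>z. case i of (l,s,t) \<Rightarrow> C l s t z) \<in> cspan C J"
    using cspan_basis[OF assms(1)] \<open>i \<in> J\<close> by (simp add: case_prod_beta)
qed

context th5 begin

definition Tx where "Tx x F = (\<lambda>z. \<Sum>y\<in>UNIV. if x * y = z then \<alpha> x y * F y else 0)"

lemma tmult_Tx: "tmult \<alpha> UNIV a F z = (\<Sum>x\<in>UNIV. a x * Tx x F z)"
  unfolding tmult_def Tx_def by (simp add: sum_distrib_left if_distrib mult_ac cong: if_cong)

lemma Phi_alt: "Phi D L K F z = (\<Sum>g\<in>GD st one D. F g * (if w L g K = z then BB D L g K else 0))"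
  unfolding Phi_def BB_def by (rule sum.cong[OF refl]) (simp add: mult_ac)

lemma Phi_lin: "Phi D L K (\<lambda>y. \<Sum>i\<in>I. c i * F i y) z = (\<Sum>i\<in>I. c i * Phi D L K (F i) z)"
  unfolding Phi_alt by (simp add: sum_distrib_left sum_distrib_right mult.assoc sum.swap[of _ I])

lemma Phi_diff: "Phi D L K (\<lambda>y. F1 y - F2 y) z = Phi D L K F1 z - Phi D L K F2 z"
  unfolding Phi_alt by (simp add: left_diff_distrib sum_subtractf)

lemma Tx_Phi: "Tx x (Phi D L K F) z =
   (\<Sum>g\<in>GD st one D. if x * w L g K = z then \<alpha> x (w L g K) * (F g * BB D L g K) else 0)"
proof -
  have "Tx x (Phi D L K F) z = (\<Sum>y\<in>UNIV. \<Sum>g\<in>GD st one D.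
          if w L g K = y then (if x * y = z then \<alpha> x y * (F g * BB D L g K) else 0) else 0)"
    unfolding Tx_def Phi_alt
  proof (rule sum.cong[OF refl])
    fix y
    show "(if x * y = z then \<alpha> x y * (\<Sum>g\<in>GD st one D. F g * (if w L g K = y then BB D L g K else 0)) else 0) =
      (\<Sum>g\<in>GD st one D. if w L g K = y then (if x * y = z then \<alpha> x y * (F g * BB D L g K) else 0) else 0)"
    proof (cases "x * y = z")
      case True
      then show ?thesis by (simp add: sum_distrib_left) (rule sum.cong, auto)
    next
      case False
      then have F: "(x * y = z) = False" by simp
      show ?thesis by (simp only: F if_False if_cancel sum.neutral_const)
    qed
  qed
  also have "\<dots> = (\<Sum>g\<in>GD st one D. \<Sum>y\<in>UNIV.
          if w L g K = y then (if x * y = z then \<alpha> x y * (F g * BB D L g K) else 0) else 0)"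
    by (rule sum.swap)
  also have "\<dots> = (\<Sum>g\<in>GD st one D. if x * w L g K = z then \<alpha> x (w L g K) * (F g * BB D L g K) else 0)"
    by (rule sum.cong[OF refl]) (simp only: sum.delta' finite UNIV_I if_True)
  finally show ?thesis .
qed

end

context th5 begin

definition LOW where "LOW l = {(m, s'', t''). (m, s'', t'') \<in> cell_idx LAM MM \<and> LE m l \<and> m \<noteq> l}"

lemma finite_LOW: "finite (LOW l)"
  by (rule finite_subset[OF _ finite_big]) (auto simp: LOW_def)

lemma big_sum_alt: "(\<Sum>(l,s,t)\<in>X. c (l,s,t) * CC l s t z) = (\<Sum>i\<in>X. c i * (case i of (l,s,t) \<Rightarrow> CC l s t z))"
  by (rule sum.cong[OF refl]) (auto split: prod.splits)

lemma CC_zero_out: assumes "i \<in> cell_idx LAM MM" "fst (fst i) = D1" "z \<notin> D1"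
  shows "(case i of (l,s,t) \<Rightarrow> CC l s t z) = 0"
proof -
  obtain D l L s K t where ieq: "i = ((D, l), (L, s), (K, t))" by (metis prod.collapse)
  have im: "D \<in> Dclasses" "L \<in> Lclasses D" "K \<in> Lclasses D" using assms(1) ieq big_mem by auto
  have "D = D1" using assms(2) ieq by simp
  then show ?thesis using ieq Phi_supp[OF im(1) im(2) im(3)] assms(3) by (simp add: CC_Phi)
qed

lemma DELTA_LOW:
  assumes D: "D \<in> Dclasses" and lam: "lam \<in> \<Lambda>D D" and less: "lessDcl {y. greenD p y} D"
  shows "(\<lambda>z. if p = z then 1 else 0) \<in> cspan CC (LOW (D, lam))"
proof -
  define D' where "D' = {y. greenD p y}"
  have D': "D' \<in> Dclasses" unfolding D'_def by (rule Dcl_of)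
  have pD: "p \<in> D'" unfolding D'_def by (rule Dcl_self)
  have DD: "D' \<noteq> D" using less unfolding D'_def lessDcl_def by simp
  let ?d = "\<lambda>z. if p = z then (1::'r) else 0"
  have "?d \<in> tvec UNIV" unfolding tvec_def by simp
  then obtain c where c: "?d = (\<lambda>z. \<Sum>(l,s,t)\<in>cell_idx LAM MM. c (l,s,t) * CC l s t z)"
    using C1_basis by blast
  define I where "I = {i \<in> cell_idx LAM MM. fst (fst i) = D'}"
  have Ifin: "finite I" unfolding I_def using finite_big by simp
  have ISub: "I \<subseteq> LOW (D, lam)"
  proof
    fix i assume i: "i \<in> I"
    obtain D1 m L1 s1 K1 t1 where ieq: "i = ((D1, m), (L1, s1), (K1, t1))" by (metis prod.collapse)
    have "D1 = D'" "i \<in> cell_idx LAM MM" using i ieq unfolding I_def by auto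
    then show "i \<in> LOW (D, lam)" unfolding LOW_def LE_def using ieq less DD unfolding D'_def by auto
  qed
  have "?d = (\<lambda>z. \<Sum>i\<in>I. c i * (case i of (l,s,t) \<Rightarrow> CC l s t z))"
  proof (rule ext)
    fix z :: 'a
    have e1: "?d z = (\<Sum>i\<in>cell_idx LAM MM. c i * (case i of (l,s,t) \<Rightarrow> CC l s t z))"
      using fun_cong[OF c, of z] big_sum_alt by simp
    show "?d z = (\<Sum>i\<in>I. c i * (case i of (l,s,t) \<Rightarrow> CC l s t z))"
    proof (cases "z \<in> D'")
      case True
      have "(\<Sum>i\<in>cell_idx LAM MM. c i * (case i of (l,s,t) \<Rightarrow> CC l s t z)) =
          (\<Sum>i\<in>I. c i * (case i of (l,s,t) \<Rightarrow> CC l s t z))"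
      proof (rule sum.mono_neutral_right[OF finite_big])
        show "I \<subseteq> cell_idx LAM MM" unfolding I_def by blast
        show "\<forall>i\<in>cell_idx LAM MM - I. c i * (case i of (l,s,t) \<Rightarrow> CC l s t z) = 0"
        proof
          fix i assume i: "i \<in> cell_idx LAM MM - I"
          obtain D1 m L1 s1 K1 t1 where ieq: "i = ((D1, m), (L1, s1), (K1, t1))" by (metis prod.collapse)
          have "D1 \<in> Dclasses" using i ieq big_mem by auto
          moreover have "D1 \<noteq> D'" using i ieq unfolding I_def by auto
          ultimately have "z \<notin> D1" using Dcl_disj[OF _ D' _ True] by blast
          then show "c i * (case i of (l,s,t) \<Rightarrow> CC l s t z) = 0"
            using CC_zero_out[of i D1 z] i ieq by simp
        qed
      qed
      then show ?thesis using e1 by simp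
    next
      case False
      have "p \<noteq> z" using False pD by blast
      moreover have "(\<Sum>i\<in>I. c i * (case i of (l,s,t) \<Rightarrow> CC l s t z)) = 0"
      proof (rule sum.neutral, rule ballI)
        fix i assume "i \<in> I"
        then show "c i * (case i of (l,s,t) \<Rightarrow> CC l s t z) = 0"
          using CC_zero_out[of i D' z] False unfolding I_def by simp
      qed
      ultimately show ?thesis by simp
    qed
  qed
  then show ?thesis using cspan_sub[OF finite_LOW Ifin ISub, of c CC] by simp
qed

context
  fixes D :: "'a set" assumes D: "D \<in> Dclasses"
begin

lemma lessDcl_B:
  assumes L: "L \<in> Lclasses D" and K: "K \<in> Lclasses D" and g: "g \<in> GD st one D"
    and nv: "x * st (u L) \<notin> LD one D"
  shows "lessDcl {y. greenD (x * w L g K) y} D"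
proof -
  let ?p = "x * w L g K"
  let ?v = "x * st (u L)"
  have uL: "st (u L) \<in> LD one D" using u_facts[OF D L] by blast
  then have uLe: "st (u L) * one D = st (u L)" unfolding Le_char[OF D] by blast
  have peq: "?p = ?v * one D * (g * u K)" using uLe by (metis mult.assoc)
  have pJ: "leJ ?p (one D)" unfolding peq leJ_def by blast
  have le1: "leDcl {y. greenD ?p y} D" unfolding leDcl_def using pJ Dcl_self e_in[OF D] by blast
  have "{y. greenD ?p y} \<noteq> D"
  proof
    assume eq: "{y. greenD ?p y} = D"
    then have "?p \<in> D" using Dcl_self by blast
    then have "greenD (one D) ?p" using Dcl_mem[OF D e_in[OF D]] by simp
    then have j1: "leJ (one D) ?p" using greenD_J by blast
    have "?p = ?v * (g * u K)" by (simp add: mult.assoc)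
    then have "leJ ?p ?v" using leJ_mult1 by metis
    then have j2: "leJ (one D) ?v" using leJ_trans[OF j1] by blast
    have "?v = ?v * one D" using uLe by (metis mult.assoc)
    then have l1: "leL ?v (one D)" unfolding leL_def by blast
    have "leL (one D) ?v" using stabL[OF l1 j2] .
    then have "greenL (one D) ?v" using l1 unfolding greenL_def by simp
    then show False using nv Le_greenL[OF D] by blast
  qed
  then show ?thesis using le1 unfolding lessDcl_def by blast
qed

lemma KEY:
  assumes L: "L \<in> Lclasses D" and K: "K \<in> Lclasses D" and L': "L' \<in> Lclasses D"
    and g: "g \<in> GD st one D" and h: "h \<in> GD st one D"
    and v: "x * st (u L) = st (u L') * h"
  shows "x * w L g K = w L' (h * g) K"
    "\<alpha> x (w L g K) * BB D L g K =
       (\<alpha> x (st (u L)) * binv (\<beta> D (st (u L')) h)) * (\<beta> D h g * BB D L' (h * g) K)"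
proof -
  show weq: "x * w L g K = w L' (h * g) K" using v by (metis mult.assoc)
  have uL: "st (u L) \<in> LD one D" using u_facts[OF D L] by blast
  have uL': "st (u L') \<in> LD one D" using u_facts[OF D L'] by blast
  have uK: "u K \<in> st ` LD one D" using u_facts[OF D K] by blast
  have gL: "g \<in> LD one D" "g \<in> st ` LD one D" using g G_char[OF D] by auto
  have hL: "h \<in> LD one D" "h \<in> st ` LD one D" using h G_char[OF D] by auto
  have vL: "x * st (u L) \<in> LD one D" using v LG[OF D uL' h] by simp
  have vgL: "x * st (u L) * g \<in> LD one D" using LG[OF D vL g] .
  have uLg: "st (u L) * g \<in> LD one D" using LG[OF D uL g] .
  have c1: "\<alpha> x (st (u L) * g) * \<beta> D (x * (st (u L) * g)) (u K) =
            \<alpha> x (st (u L) * g * u K) * \<beta> D (st (u L) * g) (u K)"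
    using A3_compat D vgL uK uLg by (simp add: mult.assoc)
  have c2: "\<alpha> x (st (u L)) * \<beta> D (x * st (u L)) g = \<alpha> x (st (u L) * g) * \<beta> D (st (u L)) g"
    using A3_compat D vL gL(2) uL by blast
  have hg: "h * g \<in> st ` LD one D" using GR[OF D gL(2) h] .
  have c3: "\<beta> D (st (u L')) h * \<beta> D (st (u L') * h) g = \<beta> D (st (u L')) (h * g) * \<beta> D h g"
    using A3_cocycle D uL' hL vL v gL(2) hg by (metis)
  have unit: "\<beta> D (st (u L')) h dvd 1" using A3_unit D uL' hL(2) by blast
  have bi: "\<beta> D (st (u L')) h * binv (\<beta> D (st (u L')) h) = 1" using binv[OF unit] .
  have "\<beta> D (x * st (u L)) g = binv (\<beta> D (st (u L')) h) * (\<beta> D (st (u L')) (h * g) * \<beta> D h g)"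
  proof -
    have "\<beta> D (x * st (u L)) g = (binv (\<beta> D (st (u L')) h) * \<beta> D (st (u L')) h) * \<beta> D (st (u L') * h) g"
      using bi v by (simp add: mult.commute)
    also have "\<dots> = binv (\<beta> D (st (u L')) h) * (\<beta> D (st (u L')) h * \<beta> D (st (u L') * h) g)"
      by (simp add: mult.assoc)
    also have "\<dots> = binv (\<beta> D (st (u L')) h) * (\<beta> D (st (u L')) (h * g) * \<beta> D h g)" using c3 by simp
    finally show ?thesis .
  qed
  then have c4: "\<beta> D (x * st (u L)) g = binv (\<beta> D (st (u L')) h) * (\<beta> D (st (u L')) (h * g) * \<beta> D h g)" .
  have vg: "x * (st (u L) * g) = st (u L') * (h * g)" using v by (metis mult.assoc)
  have "\<alpha> x (w L g K) * BB D L g K = (\<alpha> x (st (u L) * g * u K) * \<beta> D (st (u L) * g) (u K)) * \<beta> D (st (u L)) g"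
    unfolding BB_def by (simp add: mult_ac)
  also have "\<dots> = \<alpha> x (st (u L) * g) * \<beta> D (st (u L)) g * \<beta> D (x * (st (u L) * g)) (u K)"
    using c1 by (simp add: mult_ac)
  also have "\<dots> = \<alpha> x (st (u L)) * \<beta> D (x * st (u L)) g * \<beta> D (x * (st (u L) * g)) (u K)"
    using c2 by simp
  also have "\<dots> = \<alpha> x (st (u L)) * (binv (\<beta> D (st (u L')) h) * (\<beta> D (st (u L')) (h * g) * \<beta> D h g))
       * \<beta> D (st (u L') * (h * g)) (u K)"
    using c4 vg by simp
  also have "\<dots> = (\<alpha> x (st (u L)) * binv (\<beta> D (st (u L')) h)) * (\<beta> D h g * BB D L' (h * g) K)"
    unfolding BB_def by (simp add: mult_ac)
  finally show "\<alpha> x (w L g K) * BB D L g K =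
       (\<alpha> x (st (u L)) * binv (\<beta> D (st (u L')) h)) * (\<beta> D h g * BB D L' (h * g) K)" .
qed

end
end

context th5 begin

definition HF where "HF D h F = tmult (\<beta> D) (GD st one D) (\<lambda>y. if y = h then 1 else 0) F"

lemma HF_eq: assumes h: "h \<in> GD st one D"
  shows "HF D h F y = (\<Sum>g\<in>GD st one D. if h * g = y then \<beta> D h g * F g else 0)"
proof -
  have "HF D h F y = (\<Sum>x'\<in>GD st one D. if x' = h then (\<Sum>g\<in>GD st one D. if h * g = y then \<beta> D h g * F g else 0) else 0)"
    unfolding HF_def tmult_def
  proof (rule sum.cong[OF refl])
    fix x' assume "x' \<in> GD st one D"
    show "(\<Sum>g\<in>GD st one D. if x' * g = y then \<beta> D x' g * (if x' = h then 1 else 0) * F g else 0) =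
      (if x' = h then \<Sum>g\<in>GD st one D. if h * g = y then \<beta> D h g * F g else 0 else 0)"
    proof (cases "x' = h")
      case True
      show ?thesis unfolding True by (simp only: simp_thms if_True) (rule sum.cong[OF refl], simp)
    next
      case False
      then show ?thesis by (simp only: if_False) (rule sum.neutral, simp)
    qed
  qed
  also have "\<dots> = (\<Sum>g\<in>GD st one D. if h * g = y then \<beta> D h g * F g else 0)" using h by simp
  finally show ?thesis .
qed

context
  fixes D :: "'a set" assumes D: "D \<in> Dclasses"
begin

lemma TXA:
  assumes L: "L \<in> Lclasses D" and K: "K \<in> Lclasses D" and L': "L' \<in> Lclasses D"
    and h: "h \<in> GD st one D"
    and v: "x * st (u L) = st (u L') * h"
  shows "Tx x (Phi D L K F) z =
     (\<alpha> x (st (u L)) * binv (\<beta> D (st (u L')) h)) * Phi D L' K (HF D h F) z"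
proof -
  let ?k = "\<alpha> x (st (u L)) * binv (\<beta> D (st (u L')) h)"
  let ?G = "GD st one D"
  have "Tx x (Phi D L K F) z = (\<Sum>g\<in>?G. if x * w L g K = z then \<alpha> x (w L g K) * (F g * BB D L g K) else 0)"
    by (rule Tx_Phi)
  also have "\<dots> = (\<Sum>g\<in>?G. ?k * (\<beta> D h g * F g * (if w L' (h * g) K = z then BB D L' (h * g) K else 0)))"
  proof (rule sum.cong[OF refl])
    fix g assume g: "g \<in> ?G"
    note k = KEY[OF D L K L' g h v]
    have "\<alpha> x (w L g K) * (F g * BB D L g K) = F g * (\<alpha> x (w L g K) * BB D L g K)" by (simp add: mult_ac)
    then show "(if x * w L g K = z then \<alpha> x (w L g K) * (F g * BB D L g K) else 0) =
       ?k * (\<beta> D h g * F g * (if w L' (h * g) K = z then BB D L' (h * g) K else 0))"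
      using k by (simp add: mult_ac)
  qed
  also have "\<dots> = ?k * (\<Sum>g\<in>?G. \<beta> D h g * F g * (if w L' (h * g) K = z then BB D L' (h * g) K else 0))"
    by (simp add: sum_distrib_left)
  also have "(\<Sum>g\<in>?G. \<beta> D h g * F g * (if w L' (h * g) K = z then BB D L' (h * g) K else 0)) =
     (\<Sum>g\<in>?G. \<Sum>y\<in>?G. if h * g = y then \<beta> D h g * F g * (if w L' y K = z then BB D L' y K else 0) else 0)"
  proof (rule sum.cong[OF refl])
    fix g assume g: "g \<in> ?G"
    have "h * g \<in> ?G" using GG[OF D h g] .
    then show "\<beta> D h g * F g * (if w L' (h * g) K = z then BB D L' (h * g) K else 0) =
       (\<Sum>y\<in>?G. if h * g = y then \<beta> D h g * F g * (if w L' y K = z then BB D L' y K else 0) else 0)"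
      by simp
  qed
  also have "\<dots> = (\<Sum>y\<in>?G. \<Sum>g\<in>?G. if h * g = y then \<beta> D h g * F g * (if w L' y K = z then BB D L' y K else 0) else 0)"
    by (rule sum.swap)
  also have "\<dots> = (\<Sum>y\<in>?G. HF D h F y * (if w L' y K = z then BB D L' y K else 0))"
    unfolding HF_eq[OF h]
  proof (rule sum.cong[OF refl])
    fix y assume "y \<in> ?G"
    show "(\<Sum>g\<in>?G. if h * g = y then \<beta> D h g * F g * (if w L' y K = z then BB D L' y K else 0) else 0) =
      (\<Sum>g\<in>?G. if h * g = y then \<beta> D h g * F g else 0) * (if w L' y K = z then BB D L' y K else 0)"
      unfolding sum_distrib_right by (rule sum.cong[OF refl]) simp
  qed
  also have "\<dots> = Phi D L' K (HF D h F) z" unfolding Phi_alt by simp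
  finally show ?thesis .
qed

lemma prod_sum:
  fixes k :: 'r and r0 :: "'m \<Rightarrow> 'r" and G :: "'a set \<times> 'm \<Rightarrow> 'r" and B :: "'m set"
  assumes L': "L' \<in> Lclasses D" and fin: "finite B"
  shows "(\<Sum>p\<in>Lclasses D \<times> B. (if fst p = L' then k * r0 (snd p) else 0) * G p) =
     k * (\<Sum>b\<in>B. r0 b * G (L', b))"
proof -
  have fA: "finite (Lclasses D)" by simp
  have "(\<Sum>p\<in>Lclasses D \<times> B. (if fst p = L' then k * r0 (snd p) else 0) * G p) =
     (\<Sum>a\<in>Lclasses D. \<Sum>b\<in>B. (if a = L' then k * r0 b else 0) * G (a, b))"
    unfolding sum.cartesian_product by (rule sum.cong[OF refl]) (auto split: prod.splits)
  also have "\<dots> = (\<Sum>a\<in>Lclasses D. if a = L' then (\<Sum>b\<in>B. k * r0 b * G (a, b)) else 0)"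
  proof (rule sum.cong[OF refl])
    fix a
    show "(\<Sum>b\<in>B. (if a = L' then k * r0 b else 0) * G (a, b)) = (if a = L' then (\<Sum>b\<in>B. k * r0 b * G (a, b)) else 0)"
    proof (cases "a = L'")
      case True then show ?thesis by (simp only: if_True simp_thms)
    next
      case False then show ?thesis by (simp only: False if_False simp_thms mult_zero_left sum.neutral_const)
    qed
  qed
  also have "\<dots> = (\<Sum>b\<in>B. k * r0 b * G (L', b))" using L' fA by simp
  also have "\<dots> = k * (\<Sum>b\<in>B. r0 b * G (L', b))" by (simp add: sum_distrib_left mult.assoc)
  finally show ?thesis .
qed

lemma PX:
  assumes lam: "lam \<in> \<Lambda>D D" and L: "L \<in> Lclasses D" and s0: "s0 \<in> MD D lam"
  shows "\<exists>r. \<forall>t\<in>MM (D, lam). (\<lambda>z. Tx x (CC (D, lam) (L, s0) t) z - (\<Sum>s'\<in>MM (D, lam). r s' * CC (D, lam) s' t z))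
          \<in> cspan CC (LOW (D, lam))"
proof (cases "x * st (u L) \<in> LD one D")
  case False
  show ?thesis
  proof (intro exI[of _ "\<lambda>_. 0"] ballI)
    fix t assume t: "t \<in> MM (D, lam)"
    obtain K t0 where teq: "t = (K, t0)" by (metis prod.collapse)
    have K: "K \<in> Lclasses D" using t teq unfolding MM_def by auto
    have eq: "(\<lambda>z. Tx x (CC (D, lam) (L, s0) t) z - (\<Sum>s'\<in>MM (D, lam). 0 * CC (D, lam) s' t z)) =
      (\<lambda>z. \<Sum>g\<in>GD st one D. (\<alpha> x (w L g K) * (CD D lam s0 t0 g * BB D L g K)) * (if x * w L g K = z then 1 else 0))"
      unfolding teq CC_Phi Tx_Phi by (simp add: if_distrib cong: if_cong)
    have "(\<lambda>z. \<Sum>g\<in>GD st one D. (\<alpha> x (w L g K) * (CD D lam s0 t0 g * BB D L g K)) * (if x * w L g K = z then 1 else 0))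
       \<in> cspan CC (LOW (D, lam))"
    proof (rule cspan_comb[OF finite_LOW finite_G])
      fix g assume g: "g \<in> GD st one D"
      show "(\<lambda>z. if x * w L g K = z then 1 else 0) \<in> cspan CC (LOW (D, lam))"
        using DELTA_LOW[OF D lam lessDcl_B[OF D L K g False]] .
    qed
    then show "(\<lambda>z. Tx x (CC (D, lam) (L, s0) t) z - (\<Sum>s'\<in>MM (D, lam). 0 * CC (D, lam) s' t z))
          \<in> cspan CC (LOW (D, lam))" using eq by simp
  qed
next
  case True
  obtain L' h where L': "L' \<in> Lclasses D" and h: "h \<in> GD st one D" and v: "x * st (u L) = st (u L') * h"
    using Le_decomp[OF D True] by blast
  define k where "k = \<alpha> x (st (u L)) * binv (\<beta> D (st (u L')) h)"
  define LOWD where "LOWD = {(m, s'', t''). (m, s'', t'') \<in> cell_idx (\<Lambda>D D) (MD D) \<and> leD D m lam \<and> m \<noteq> lam}"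
  have dh: "(\<lambda>y. if y = h then 1 else 0) \<in> tvec (GD st one D)" using h unfolding tvec_def by auto
  obtain r0 where r0: "\<forall>t0\<in>MD D lam. (\<lambda>z. HF D h (CD D lam s0 t0) z - (\<Sum>s'\<in>MD D lam. r0 s' * CD D lam s' t0 z))
          \<in> cspan (CD D) LOWD"
    using A4_unf(7)[OF D lam s0 dh] unfolding HF_def LOWD_def by blast
  have finLOWD: "finite LOWD"
    by (rule finite_subset[of _ "cell_idx (\<Lambda>D D) (MD D)"]) (auto simp: LOWD_def intro: finite_cell_idx A4_unf[OF D])
  show ?thesis
  proof (intro exI[of _ "\<lambda>p. if fst p = L' then k * r0 (snd p) else 0"] ballI)
    fix t assume t: "t \<in> MM (D, lam)"
    obtain K t0 where teq: "t = (K, t0)" by (metis prod.collapse)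
    have K: "K \<in> Lclasses D" and t0: "t0 \<in> MD D lam" using t teq unfolding MM_def by auto
    obtain d where d: "(\<lambda>z. HF D h (CD D lam s0 t0) z - (\<Sum>s'\<in>MD D lam. r0 s' * CD D lam s' t0 z)) =
       (\<lambda>z. \<Sum>j\<in>LOWD. d j * (case j of (m,s,t) \<Rightarrow> CD D m s t z))"
      using r0 t0 unfolding cspan_alt by blast
    let ?Fj = "\<lambda>j z. case j of (m,s'',t'') \<Rightarrow> CC (D, m) (L', s'') (K, t'') z"
    have eq: "(\<lambda>z. Tx x (CC (D, lam) (L, s0) t) z -
           (\<Sum>s'\<in>MM (D, lam). (if fst s' = L' then k * r0 (snd s') else 0) * CC (D, lam) s' t z)) =
         (\<lambda>z. \<Sum>j\<in>LOWD. (k * d j) * ?Fj j z)"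
    proof (rule ext)
      fix z :: 'a
      have fMD: "finite (MD D lam)" using A4_unf(3)[OF D lam] .
      have 1: "Tx x (CC (D, lam) (L, s0) t) z = k * Phi D L' K (HF D h (CD D lam s0 t0)) z"
        unfolding teq CC_Phi k_def using TXA[OF L K L' h v] .
      have 2: "(\<Sum>s'\<in>MM (D, lam). (if fst s' = L' then k * r0 (snd s') else 0) * CC (D, lam) s' t z) =
          k * (\<Sum>b\<in>MD D lam. r0 b * Phi D L' K (CD D lam b t0) z)"
        unfolding MM_def using prod_sum[OF L' fMD, of k r0 "\<lambda>p. CC (D, lam) p t z"]
        by (simp add: teq CC_Phi)
      have 3: "Phi D L' K (HF D h (CD D lam s0 t0)) z - (\<Sum>b\<in>MD D lam. r0 b * Phi D L' K (CD D lam b t0) z)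
          = Phi D L' K (\<lambda>y. HF D h (CD D lam s0 t0) y - (\<Sum>s'\<in>MD D lam. r0 s' * CD D lam s' t0 y)) z"
        by (simp add: Phi_diff Phi_lin)
      have 4: "Phi D L' K (\<lambda>y. \<Sum>j\<in>LOWD. d j * (case j of (m,s,t) \<Rightarrow> CD D m s t y)) z =
          (\<Sum>j\<in>LOWD. d j * ?Fj j z)"
      proof -
        have "Phi D L' K (\<lambda>y. \<Sum>j\<in>LOWD. d j * (case j of (m,s,t) \<Rightarrow> CD D m s t y)) z =
           (\<Sum>j\<in>LOWD. d j * Phi D L' K (\<lambda>y. case j of (m,s,t) \<Rightarrow> CD D m s t y) z)"
          by (rule Phi_lin)
        also have "\<dots> = (\<Sum>j\<in>LOWD. d j * ?Fj j z)"
          by (rule sum.cong[OF refl]) (auto simp: CC_Phi split: prod.splits)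
        finally show ?thesis .
      qed
      have "Tx x (CC (D, lam) (L, s0) t) z -
           (\<Sum>s'\<in>MM (D, lam). (if fst s' = L' then k * r0 (snd s') else 0) * CC (D, lam) s' t z)
          = k * (Phi D L' K (HF D h (CD D lam s0 t0)) z - (\<Sum>b\<in>MD D lam. r0 b * Phi D L' K (CD D lam b t0) z))"
        using 1 2 by (simp add: right_diff_distrib)
      also have "\<dots> = k * (\<Sum>j\<in>LOWD. d j * ?Fj j z)" using 3 4 d by simp
      also have "\<dots> = (\<Sum>j\<in>LOWD. (k * d j) * ?Fj j z)" by (simp add: sum_distrib_left mult.assoc)
      finally show "Tx x (CC (D, lam) (L, s0) t) z -
           (\<Sum>s'\<in>MM (D, lam). (if fst s' = L' then k * r0 (snd s') else 0) * CC (D, lam) s' t z) =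
           (\<Sum>j\<in>LOWD. (k * d j) * ?Fj j z)" .
    qed
    have "(\<lambda>z. \<Sum>j\<in>LOWD. (k * d j) * ?Fj j z) \<in> cspan CC (LOW (D, lam))"
    proof (rule cspan_comb[OF finite_LOW finLOWD])
      fix j assume j: "j \<in> LOWD"
      obtain m s'' t'' where jeq: "j = (m, s'', t'')" by (metis prod.collapse)
      have jm: "m \<in> \<Lambda>D D" "s'' \<in> MD D m" "t'' \<in> MD D m" "leD D m lam" "m \<noteq> lam"
        using j jeq unfolding LOWD_def cell_idx_def by auto
      have "((D, m), (L', s''), (K, t'')) \<in> LOW (D, lam)"
        unfolding LOW_def LE_def using jm D L' K big_mem by auto
      then show "?Fj j \<in> cspan CC (LOW (D, lam))"
        using cspan_basis[OF finite_LOW] jeq by (simp add: case_prod_beta)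
    qed
    then show "(\<lambda>z. Tx x (CC (D, lam) (L, s0) t) z -
           (\<Sum>s'\<in>MM (D, lam). (if fst s' = L' then k * r0 (snd s') else 0) * CC (D, lam) s' t z))
          \<in> cspan CC (LOW (D, lam))" using eq by simp
  qed
qed

end
end

context th5 begin

lemma C3:
  assumes l: "l \<in> LAM" and s: "s \<in> MM l"
  shows "\<exists>r. \<forall>t\<in>MM l. (\<lambda>z. tmult \<alpha> UNIV a (CC l s t) z - (\<Sum>s'\<in>MM l. r s' * CC l s' t z)) \<in> cspan CC (LOW l)"
proof -
  obtain D lam where leq: "l = (D, lam)" and D: "D \<in> Dclasses" and lam: "lam \<in> \<Lambda>D D"
    using l unfolding LAM_def by blast
  obtain L s0 where seq: "s = (L, s0)" and L: "L \<in> Lclasses D" and s0: "s0 \<in> MD D lam"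
    using s leq unfolding MM_def by auto
  have "\<forall>x. \<exists>r. \<forall>t\<in>MM l. (\<lambda>z. Tx x (CC l s t) z - (\<Sum>s'\<in>MM l. r s' * CC l s' t z)) \<in> cspan CC (LOW l)"
    unfolding leq seq by (intro allI PX[OF D lam L s0])
  from choice[OF this] obtain R where R0: "\<forall>x. \<forall>t\<in>MM l. (\<lambda>z. Tx x (CC l s t) z - (\<Sum>s'\<in>MM l. R x s' * CC l s' t z)) \<in> cspan CC (LOW l)"
    by blast
  then have R: "\<And>x. \<forall>t\<in>MM l. (\<lambda>z. Tx x (CC l s t) z - (\<Sum>s'\<in>MM l. R x s' * CC l s' t z)) \<in> cspan CC (LOW l)"
    by blast
  show ?thesis
  proof (intro exI[of _ "\<lambda>s'. \<Sum>x\<in>UNIV. a x * R x s'"] ballI)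
    fix t assume t: "t \<in> MM l"
    have eq: "(\<lambda>z. tmult \<alpha> UNIV a (CC l s t) z - (\<Sum>s'\<in>MM l. (\<Sum>x\<in>UNIV. a x * R x s') * CC l s' t z)) =
       (\<lambda>z. \<Sum>x\<in>UNIV. a x * (Tx x (CC l s t) z - (\<Sum>s'\<in>MM l. R x s' * CC l s' t z)))"
    proof (rule ext)
      fix z :: 'a
      have "(\<Sum>s'\<in>MM l. (\<Sum>x\<in>UNIV. a x * R x s') * CC l s' t z) =
          (\<Sum>s'\<in>MM l. \<Sum>x\<in>UNIV. a x * (R x s' * CC l s' t z))"
        by (rule sum.cong[OF refl]) (simp add: sum_distrib_right mult.assoc)
      also have "\<dots> = (\<Sum>x\<in>UNIV. \<Sum>s'\<in>MM l. a x * (R x s' * CC l s' t z))" by (rule sum.swap)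
      also have "\<dots> = (\<Sum>x\<in>UNIV. a x * (\<Sum>s'\<in>MM l. R x s' * CC l s' t z))"
        by (rule sum.cong[OF refl]) (simp add: sum_distrib_left)
      finally have 1: "(\<Sum>s'\<in>MM l. (\<Sum>x\<in>UNIV. a x * R x s') * CC l s' t z) =
          (\<Sum>x\<in>UNIV. a x * (\<Sum>s'\<in>MM l. R x s' * CC l s' t z))" .
      show "tmult \<alpha> UNIV a (CC l s t) z - (\<Sum>s'\<in>MM l. (\<Sum>x\<in>UNIV. a x * R x s') * CC l s' t z) =
          (\<Sum>x\<in>UNIV. a x * (Tx x (CC l s t) z - (\<Sum>s'\<in>MM l. R x s' * CC l s' t z)))"
        unfolding tmult_Tx 1 by (simp only: right_diff_distrib sum_subtractf)
    qed
    have "(\<lambda>z. \<Sum>x\<in>UNIV. a x * (\<lambda>z. Tx x (CC l s t) z - (\<Sum>s'\<in>MM l. R x s' * CC l s' t z)) z) \<in> cspan CC (LOW l)"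
      by (rule cspan_comb[OF finite_LOW finite]) (use R t in blast)
    then show "(\<lambda>z. tmult \<alpha> UNIV a (CC l s t) z - (\<Sum>s'\<in>MM l. (\<Sum>x\<in>UNIV. a x * R x s') * CC l s' t z)) \<in> cspan CC (LOW l)"
      unfolding eq by simp
  qed
qed

lemma main: "cellular (UNIV :: 'a set) \<alpha> st LAM LE MM CC"
  unfolding cellular_def
proof (intro conjI)
  show "finite LAM" by (rule finite_LAM)
  show "partial_order_on_set LAM LE" by (rule po_LAM)
  show "\<forall>l\<in>LAM. finite (MM l)" using finite_MM by blast
  show "\<forall>l\<in>LAM. \<forall>s\<in>MM l. \<forall>t\<in>MM l. CC l s t \<in> tvec UNIV" unfolding tvec_def by simp
  show "\<forall>f\<in>tvec UNIV. \<exists>!c. (\<forall>i. i \<notin> cell_idx LAM MM \<longrightarrow> c i = 0) \<and>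
         f = (\<lambda>z. \<Sum>(l,s,t)\<in>cell_idx LAM MM. c (l,s,t) * CC l s t z)" by (rule C1_basis)
  show "alg_anti_involution \<alpha> UNIV st" by (rule alg_inv)
  show "\<forall>l\<in>LAM. \<forall>s\<in>MM l. \<forall>t\<in>MM l. tstar st UNIV (CC l s t) = CC l t s"
  proof (intro ballI)
    fix l s t assume l: "l \<in> LAM" and s: "s \<in> MM l" and t: "t \<in> MM l"
    obtain D lam where leq: "l = (D, lam)" and D: "D \<in> Dclasses" and lam: "lam \<in> \<Lambda>D D"
      using l unfolding LAM_def by blast
    obtain L s0 where seq: "s = (L, s0)" and L: "L \<in> Lclasses D" and s0: "s0 \<in> MD D lam"
      using s leq unfolding MM_def by auto
    obtain K t0 where teq: "t = (K, t0)" and K: "K \<in> Lclasses D" and t0: "t0 \<in> MD D lam"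
      using t leq unfolding MM_def by auto
    show "tstar st UNIV (CC l s t) = CC l t s"
      unfolding leq seq teq by (rule CC_star[OF D lam L K s0 t0])
  qed
  show "\<forall>l\<in>LAM. \<forall>s\<in>MM l. \<forall>a\<in>tvec UNIV. \<exists>r. \<forall>t\<in>MM l.
        (\<lambda>z. tmult \<alpha> UNIV a (CC l s t) z - (\<Sum>s'\<in>MM l. r s' * CC l s' t z))
          \<in> cspan CC {(m, s'', t''). (m, s'', t'') \<in> cell_idx LAM MM \<and> LE m l \<and> m \<noteq> l}"
    using C3 unfolding LOW_def by blast
qed

end

theorem theorem5:
  fixes st :: "'a::{semigroup_mult, finite} \<Rightarrow> 'a"
    and \<alpha> :: "'a \<Rightarrow> 'a \<Rightarrow> 'r::comm_ring_1"
    and one :: "'a set \<Rightarrow> 'a"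
    and \<beta> :: "'a set \<Rightarrow> 'a \<Rightarrow> 'a \<Rightarrow> 'r"
    and \<Lambda>D :: "'a set \<Rightarrow> 'l set"
    and leD :: "'a set \<Rightarrow> 'l \<Rightarrow> 'l \<Rightarrow> bool"
    and MD :: "'a set \<Rightarrow> 'l \<Rightarrow> 'm set"
    and CD :: "'a set \<Rightarrow> 'l \<Rightarrow> 'm \<Rightarrow> 'm \<Rightarrow> ('a \<Rightarrow> 'r)"
    and u :: "'a set \<Rightarrow> 'a"
  assumes inv: "anti_involution st"
    and tw: "twisting \<alpha>"
    and A1: "\<forall>x y. \<alpha> x y = \<alpha> (st y) (st x)"
    and A2: "\<forall>D\<in>Dclasses. one D \<in> D \<and> one D * one D = one D \<and> st (one D) = one D"
    and A3_unit: "\<forall>D\<in>Dclasses. \<forall>x\<in>LD one D. \<forall>y\<in>st ` LD one D. \<beta> D x y dvd 1"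
    and A3_cocycle: "\<forall>D\<in>Dclasses. \<forall>x y z.
        x \<in> LD one D \<and> y \<in> st ` LD one D \<and> x * y \<in> LD one D \<and> z \<in> st ` LD one D \<and>
        y * z \<in> st ` LD one D \<and> y \<in> LD one D \<longrightarrow>
        \<beta> D x y * \<beta> D (x * y) z = \<beta> D x (y * z) * \<beta> D y z"
    and A3_compat: "\<forall>D\<in>Dclasses. \<forall>x y z.
        x * y \<in> LD one D \<and> z \<in> st ` LD one D \<and> y \<in> LD one D \<longrightarrow>
        \<alpha> x y * \<beta> D (x * y) z = \<alpha> x (y * z) * \<beta> D y z"
    and A3_sym: "\<forall>D\<in>Dclasses. \<forall>x y.
        x \<in> LD one D \<and> y \<in> st ` LD one D \<and> st y \<in> LD one D \<and> st x \<in> st ` LD one D \<longrightarrow>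
        \<beta> D x y = \<beta> D (st y) (st x)"
    and A4: "\<forall>D\<in>Dclasses. cellular (GD st one D) (\<beta> D) st (\<Lambda>D D) (leD D) (MD D) (CD D)"
    and u_choice: "\<forall>D\<in>Dclasses. \<forall>L\<in>Lclasses D. u L \<in> L \<and> greenR (u L) (one D)"
  shows "cellular (UNIV :: 'a set) \<alpha> st
     {(D, l). D \<in> Dclasses \<and> l \<in> \<Lambda>D D}
     (\<lambda>(D1, l1) (D2, l2). lessDcl D1 D2 \<or> (D1 = D2 \<and> leD D1 l1 l2))
     (\<lambda>(D, l). Lclasses D \<times> MD D l)
     (\<lambda>(D, l) (L, s) (K, t). (\<lambda>z. \<Sum>g\<in>GD st one D.
        if st (u L) * g * u K = z
        then CD D l s t g * \<beta> D (st (u L)) g * \<beta> D (st (u L) * g) (u K) else 0))"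
proof -
  interpret th5 st \<alpha> one \<beta> \<Lambda>D leD MD CD u
    using assms by unfold_locales
  show ?thesis using main unfolding LAM_def LE_def MM_def CC_def .
qed


end
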